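(* For every $d\ge 1$ there exist constants $\beta_d>0$ and $C_d>0$, depending only on $d$, such that the following holds. Let $S\subset\mathbb{R}^d$ be a compact set with \[ \mathrm{diam}(S)\le 1+\beta\qquad\text{and}\qquad \mathtt{rad}(S)\ge \mathrm{Jung}_d \] for some $0\le\beta\le\beta_d$. Then there exists a set $\Delta=\{x_0,\dots,x_d\}\subset\mathbb{R}^d$ which is the vertex set of a regular simplex of edge length $1$ such that every witness $W\subseteq S$ satisfies $\mathrm{dist}_H(W,\Delta)\le C_d\beta$.
   Context: $\mathrm{Jung}_d:=\sqrt{\frac{d}{2(d+1)}}$. For a bounded set $A\subset\mathbb{R}^d$, its Chebyshev radius is $\mathtt{rad}(A)=\inf_{c\in\mathbb{R}^d}\sup_{y\in A}\|c-y\|_2$ (the radius of the smallest enclosing ball), and $\mathrm{diam}(A)=\sup_{x,y\in A}\|x-y\|_2$. A witness for $S$ is a subset $W\subseteq S$ of cardinality $d+1$ with $\mathtt{rad}(W)\ge\mathrm{Jung}_d$. A regular simplex of edge length $1$ is a set of $d+1$ points of $\mathbb{R}^d$ at pairwise distance exactly $1$. For nonempty compact $A,B\subset\mathbb{R}^d$, the Hausdorff distance is $\mathrm{dist}_H(A,B)=\max\{\sup_{a\in A}\inf_{b\in B}\|a-b\|_2,\ \sup_{b\in B}\inf_{a\in A}\|a-b\|_2\}$. *)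

theory Defs
  imports "HOL-Analysis.Analysis"
begin

definition Jung :: "nat \<Rightarrow> real" where
  "Jung d = sqrt (real d / (2 * (real d + 1)))"

definition cheb_rad :: "'a::euclidean_space set \<Rightarrow> real" where
  "cheb_rad A = (INF c. SUP y\<in>A. dist c y)"

definition witness :: "'a::euclidean_space set \<Rightarrow> 'a set \<Rightarrow> bool" where
  "witness S W \<longleftrightarrow> W \<subseteq> S \<and> card W = DIM('a) + 1 \<and> cheb_rad W \<ge> Jung DIM('a)"

definition regular_unit_simplex :: "'a::euclidean_space set \<Rightarrow> bool" where
  "regular_unit_simplex D \<longleftrightarrow> card D = DIM('a) + 1 \<and>
     (\<forall>x\<in>D. \<forall>y\<in>D. x \<noteq> y \<longrightarrow> dist x y = 1)"

text \<open>Hausdorff distance (for nonempty compact sets).\<close>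
definition hausdorff_dist :: "'a::metric_space set \<Rightarrow> 'a set \<Rightarrow> real" where
  "hausdorff_dist A B = max (SUP a\<in>A. INF b\<in>B. dist a b) (SUP b\<in>B. INF a\<in>A. dist a b)"

end

theory Submission
  imports Defs
begin


definition cen :: "(nat \<Rightarrow> 'a::euclidean_space) \<Rightarrow> nat \<Rightarrow> 'a" where
  "cen y k = (1 / real k) *\<^sub>R (\<Sum>i<k. y i)"

definition prj :: "(nat \<Rightarrow> 'a::euclidean_space) \<Rightarrow> nat \<Rightarrow> 'a \<Rightarrow> 'a" where
  "prj y k z = 2 *\<^sub>R (\<Sum>i<k. (inner z (y i - cen y k)) *\<^sub>R (y i - cen y k))"

definition regk :: "(nat \<Rightarrow> 'a::euclidean_space) \<Rightarrow> nat \<Rightarrow> bool" where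
  "regk y k \<longleftrightarrow> (\<forall>i<k. \<forall>j<k. i \<noteq> j \<longrightarrow> dist (y i) (y j) = 1)"

lemma sum_x_zero:
  assumes "k \<ge> 1"
  shows "(\<Sum>i<k. y i - cen y k) = 0"
proof -
  have "(\<Sum>i<k. y i - cen y k) = (\<Sum>i<k. y i) - real k *\<^sub>R cen y k"
    by (simp add: sum_subtractf sum_constant_scaleR)
  also have "real k *\<^sub>R cen y k = (\<Sum>i<k. y i)"
    using assms by (simp add: cen_def)
  finally show ?thesis by simp
qed

lemma sum_inner_x_zero:
  assumes "k \<ge> 1"
  shows "(\<Sum>i<k. inner z (y i - cen y k)) = 0"
  using sum_x_zero[OF assms, of y] by (metis inner_sum_right inner_zero_right)

lemma gram:
  assumes reg: "regk y k" and k: "k \<ge> 1" and i: "i < k" and j: "j < k"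
  shows "inner (y i - cen y k) (y j - cen y k) = (if i = j then 1/2 else 0) - 1 / (2 * real k)"
proof -
  define x where "x i = y i - cen y k" for i
  define N where "N i = inner (x i) (x i)" for i
  have sx: "(\<Sum>j<k. x j) = 0" using sum_x_zero[OF k, of y] by (simp add: x_def)
  have dsq: "inner (x i - x j) (x i - x j) = (if i = j then 0 else 1)" if "i < k" "j < k" for i j
  proof -
    have "x i - x j = y i - y j" by (simp add: x_def)
    moreover have "i \<noteq> j \<Longrightarrow> norm (y i - y j) = 1" using reg that by (simp add: regk_def dist_norm)
    ultimately show ?thesis by (simp add: power2_norm_eq_inner[symmetric])
  qed
  have exp: "inner (x i - x j) (x i - x j) = N i + N j - 2 * inner (x i) (x j)" for i j
    by (simp add: N_def inner_diff_left inner_diff_right inner_commute)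
  have row: "real k * N i + (\<Sum>j<k. N j) = real k - 1" if "i < k" for i
  proof -
    have "(\<Sum>j<k. inner (x i - x j) (x i - x j)) = (\<Sum>j<k. if i = j then 0 else 1)"
      using dsq that by (intro sum.cong) auto
    also have "\<dots> = real k - 1"
      using that by (simp add: sum.If_cases Diff_eq[symmetric] card_Diff_singleton)
    finally have A: "(\<Sum>j<k. inner (x i - x j) (x i - x j)) = real k - 1" .
    have "(\<Sum>j<k. inner (x i - x j) (x i - x j)) = (\<Sum>j<k. N i + N j - 2 * inner (x i) (x j))"
      using exp by simp
    also have "\<dots> = real k * N i + (\<Sum>j<k. N j) - 2 * inner (x i) (\<Sum>j<k. x j)"
      by (simp add: sum_subtractf sum.distrib inner_sum_right sum_distrib_left)
    also have "\<dots> = real k * N i + (\<Sum>j<k. N j)" using sx by simp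
    finally show ?thesis using A by simp
  qed
  have "(\<Sum>i<k. real k * N i + (\<Sum>j<k. N j)) = (\<Sum>i<k. real k - 1)"
    using row by (intro sum.cong) auto
  moreover have "(\<Sum>i<k. real k * N i + (\<Sum>j<k. N j)) = 2 * real k * (\<Sum>j<k. N j)"
    by (simp add: sum.distrib sum_distrib_left[symmetric])
  ultimately have "real k * (2 * (\<Sum>j<k. N j)) = real k * (real k - 1)"
    by simp
  hence "2 * (\<Sum>j<k. N j) = real k - 1" using k by simp
  hence SN: "(\<Sum>j<k. N j) = (real k - 1) / 2" by simp
  have Ni: "N m = (real k - 1) / (2 * real k)" if "m < k" for m
    using row[OF that] SN k by (simp add: field_simps)
  show ?thesis
  proof (cases "i = j")
    case True thus ?thesis using Ni[OF i] k by (simp add: N_def x_def field_simps)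
  next
    case False
    have "inner (x i) (x j) = (N i + N j - 1) / 2" using exp[of i j] dsq[OF i j] False by simp
    thus ?thesis using Ni[OF i] Ni[OF j] False k by (simp add: x_def field_simps)
  qed
qed

lemma key_sum:
  assumes reg: "regk y k" and k: "k \<ge> 1" and j: "j < k"
  shows "(\<Sum>i<k. inner z (y i - cen y k) * inner (y i - cen y k) (y j - cen y k)) = inner z (y j - cen y k) / 2"
proof -
  define a where "a i = inner z (y i - cen y k)" for i
  have "(\<Sum>i<k. inner z (y i - cen y k) * inner (y i - cen y k) (y j - cen y k))
      = (\<Sum>i<k. a i * ((if i = j then 1/2 else 0) - 1 / (2 * real k)))"
    using gram[OF reg k _ j] by (intro sum.cong) (auto simp: a_def)
  also have "\<dots> = (\<Sum>i<k. (if i = j then a i / 2 else 0) - a i / (2 * real k))"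
    by (intro sum.cong) (auto simp: right_diff_distrib)
  also have "\<dots> = (\<Sum>i<k. if i = j then a i / 2 else 0) - (\<Sum>i<k. a i) / (2 * real k)"
    by (simp add: sum_subtractf sum_divide_distrib)
  also have "(\<Sum>i<k. a i) = 0" unfolding a_def by (rule sum_inner_x_zero[OF k])
  also have "(\<Sum>i<k. if i = j then a i / 2 else 0) = a j / 2"
    using j by simp
  finally show ?thesis by (simp add: a_def)
qed

lemma prj_orth:
  assumes reg: "regk y k" and k: "k \<ge> 1" and j: "j < k"
  shows "inner (z - prj y k z) (y j - cen y k) = 0"
proof -
  have "inner (prj y k z) (y j - cen y k) = 2 * (\<Sum>i<k. inner z (y i - cen y k) * inner (y i - cen y k) (y j - cen y k))"
    by (simp add: prj_def inner_sum_left)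
  also have "\<dots> = inner z (y j - cen y k)" using key_sum[OF reg k j, where z=z] by linarith
  finally show ?thesis by (simp add: inner_diff_left)
qed

lemma inner_prj:
  "inner w (prj y k z) = 2 * (\<Sum>i<k. inner z (y i - cen y k) * inner w (y i - cen y k))"
  by (simp add: prj_def inner_sum_right)

lemma prj_orth2:
  assumes reg: "regk y k" and k: "k \<ge> 1"
  shows "inner (z - prj y k z) (prj y k w) = 0"
  using prj_orth[OF reg k] by (simp add: inner_prj)

lemma prj_sq:
  assumes reg: "regk y k" and k: "k \<ge> 1"
  shows "inner (prj y k z) (prj y k z) = 2 * (\<Sum>i<k. (inner z (y i - cen y k))^2)"
    and "inner z (prj y k z) = 2 * (\<Sum>i<k. (inner z (y i - cen y k))^2)"
proof -
  show B: "inner z (prj y k z) = 2 * (\<Sum>i<k. (inner z (y i - cen y k))^2)"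
    by (simp add: inner_prj power2_eq_square)
  have "inner (z - prj y k z) (prj y k z) = 0" by (rule prj_orth2[OF reg k])
  thus "inner (prj y k z) (prj y k z) = 2 * (\<Sum>i<k. (inner z (y i - cen y k))^2)"
    using B by (simp add: inner_diff_left)
qed

lemma cen_upd: "cen (y(k := v)) k = cen y k"
proof -
  have "(\<Sum>i<k. (y(k := v)) i) = (\<Sum>i<k. y i)" by (intro sum.cong) auto
  thus ?thesis by (simp add: cen_def)
qed

lemma norm_one_of_inner: "inner v v = 1 \<Longrightarrow> norm v = 1"
  by (metis norm_eq_sqrt_inner real_sqrt_one)

lemma inner_diff_scale:
  "inner (X - s *\<^sub>R B) (X - s *\<^sub>R B) = inner X X - 2 * s * inner X B + s * s * inner B B"
  by (simp add: inner_diff_left inner_diff_right inner_commute algebra_simps)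

lemma ext_reg:
  assumes reg: "regk y k" and k: "k \<ge> 1" and bdef: "b = w - prj y k w" and bnz: "b \<noteq> 0"
  shows "regk (y(k := cen y k + (sqrt ((real k + 1) / (2 * real k)) / norm b) *\<^sub>R b)) (Suc k)"
proof -
  define s where "s = sqrt ((real k + 1) / (2 * real k)) / norm b"
  define y' where "y' = y(k := cen y k + s *\<^sub>R b)"
  have nb: "norm b > 0" using bnz by simp
  have ss: "s * s * inner b b = (real k + 1) / (2 * real k)"
  proof -
    have sn: "s * norm b = sqrt ((real k + 1) / (2 * real k))" using nb by (simp add: s_def)
    have "s * s * inner b b = (s * norm b)^2"
      by (simp add: power_mult_distrib power2_eq_square flip: power2_norm_eq_inner)
    also have "\<dots> = (real k + 1) / (2 * real k)" unfolding sn by simp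
    finally show ?thesis .
  qed
  have d1: "dist (y i) (y' k) = 1" if i: "i < k" for i
  proof -
    have orth: "inner (y i - cen y k) b = 0"
      using prj_orth[OF reg k i, of w] bdef by (simp add: inner_commute)
    have g: "inner (y i - cen y k) (y i - cen y k) = (real k - 1) / (2 * real k)"
      using gram[OF reg k i i] k by (simp add: field_simps)
    have e: "y i - y' k = (y i - cen y k) - s *\<^sub>R b" by (simp add: y'_def)
    have "inner (y i - y' k) (y i - y' k) = inner (y i - cen y k) (y i - cen y k) - 2 * s * inner (y i - cen y k) b + s * s * inner b b"
      unfolding e by (rule inner_diff_scale)
    also have "\<dots> = (real k - 1) / (2 * real k) + (real k + 1) / (2 * real k)" using orth g ss by simp
    also have "\<dots> = 1" using k by (simp add: add_divide_distrib[symmetric])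
    finally show ?thesis by (simp add: dist_norm norm_one_of_inner)
  qed
  have "regk y' (Suc k)"
    unfolding regk_def
  proof (intro allI impI)
    fix i j assume ij: "i < Suc k" "j < Suc k" "i \<noteq> j"
    show "dist (y' i) (y' j) = 1"
    proof (cases "i = k")
      case True
      hence "j < k" using ij by auto
      thus ?thesis using d1 True by (simp add: y'_def dist_commute)
    next
      case False
      hence ik: "i < k" using ij by auto
      show ?thesis
      proof (cases "j = k")
        case True thus ?thesis using d1[OF ik] False by (simp add: y'_def)
      next
        case False
        thus ?thesis using ik ij reg \<open>i \<noteq> k\<close> by (simp add: y'_def regk_def)
      qed
    qed
  qed
  thus ?thesis by (simp add: y'_def s_def)
qed

lemma trace_prj:
  "(\<Sum>b\<in>Basis. inner b (prj y k b)) = 2 * (\<Sum>i<k. inner (y i - cen y k) (y i - cen y k))"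
proof -
  have "(\<Sum>b\<in>Basis. inner b (prj y k b)) = (\<Sum>b\<in>Basis. 2 * (\<Sum>i<k. inner b (y i - cen y k) * inner b (y i - cen y k)))"
    by (simp add: inner_prj)
  also have "\<dots> = 2 * (\<Sum>i<k. \<Sum>b\<in>Basis. inner (y i - cen y k) b * inner (y i - cen y k) b)"
    by (simp add: sum_distrib_left[symmetric] sum.swap[of _ Basis] inner_commute)
  also have "\<dots> = 2 * (\<Sum>i<k. inner (y i - cen y k) (y i - cen y k))"
    by (simp add: euclidean_inner[symmetric])
  finally show ?thesis .
qed

lemma trace_reg:
  assumes reg: "regk y k" and k: "k \<ge> 1"
  shows "(\<Sum>b\<in>Basis. inner b (prj y k b)) = real k - 1"
proof -
  have "(\<Sum>i<k. inner (y i - cen y k) (y i - cen y k)) = (\<Sum>i<k. (real k - 1) / (2 * real k))"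
    using gram[OF reg k] k by (intro sum.cong) (auto simp: field_simps)
  also have "\<dots> = (real k - 1) / 2" using k by simp
  finally show ?thesis by (simp add: trace_prj)
qed

lemma full_prj:
  fixes y :: "nat \<Rightarrow> 'a::euclidean_space"
  assumes reg: "regk y (Suc DIM('a))"
  shows "prj y (Suc DIM('a)) z = z"
proof -
  let ?n = "Suc DIM('a)"
  have k: "?n \<ge> 1" by simp
  define q where "q b = 1 - inner b (prj y ?n b)" for b :: 'a
  have qeq: "q b = inner (b - prj y ?n b) (b - prj y ?n b)" if "b \<in> Basis" for b
  proof -
    have "inner (prj y ?n b) (prj y ?n b) = inner b (prj y ?n b)"
      using prj_sq[OF reg k, of b] by simp
    thus ?thesis using that by (simp add: q_def inner_diff_left inner_diff_right inner_commute)
  qed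
  have "(\<Sum>b\<in>Basis. q b) = 0"
    using trace_reg[OF reg k] by (simp add: q_def sum_subtractf)
  moreover have "\<forall>b\<in>Basis. 0 \<le> q b" using qeq by simp
  ultimately have "\<forall>b\<in>Basis. q b = 0" by (simp add: sum_nonneg_eq_0_iff)
  hence pb: "prj y ?n b = b" if "b \<in> Basis" for b using qeq[OF that] that by simp
  show ?thesis
  proof (rule euclidean_eqI)
    fix b :: 'a assume b: "b \<in> Basis"
    have "inner (z - prj y ?n z) (prj y ?n b) = 0" by (rule prj_orth2[OF reg k])
    thus "inner (prj y ?n z) b = inner z b" using pb[OF b] by (simp add: inner_diff_left)
  qed
qed

lemma exists_reg:
  shows "1 \<le> k \<Longrightarrow> k \<le> Suc DIM('a) \<Longrightarrow> \<exists>y::nat \<Rightarrow> 'a::euclidean_space. regk y k"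
proof (induction k)
  case 0 thus ?case by simp
next
  case (Suc k)
  show ?case
  proof (cases "k = 0")
    case True thus ?thesis by (auto simp: regk_def)
  next
    case False
    hence k: "k \<ge> 1" by simp
    obtain y :: "nat \<Rightarrow> 'a" where reg: "regk y k" using Suc k by auto
    have "\<exists>b\<in>(Basis::'a set). prj y k b \<noteq> b"
    proof (rule ccontr)
      assume "\<not> ?thesis"
      hence "(\<Sum>b\<in>(Basis::'a set). inner b (prj y k b)) = (\<Sum>b\<in>(Basis::'a set). 1)"
        by (intro sum.cong) auto
      thus False using trace_reg[OF reg k] Suc by simp
    qed
    then obtain b :: 'a where "prj y k b \<noteq> b" by auto
    hence "b - prj y k b \<noteq> 0" by simp
    from ext_reg[OF reg k refl this] show ?thesis by blast
  qed
qed



lemma sq_close: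
  fixes a d e \<epsilon> :: real
  assumes "\<bar>a^2 - 1\<bar> \<le> \<epsilon>" "\<bar>d - a\<bar> \<le> e" "0 \<le> a" "0 \<le> d" "\<epsilon> \<le> 1" "0 \<le> e" "e \<le> 1"
  shows "\<bar>d^2 - 1\<bar> \<le> \<epsilon> + 5 * e"
proof -
  have a2: "a \<le> 2"
  proof (rule ccontr)
    assume "\<not> a \<le> 2" hence "a^2 > 2^2" by (intro power_strict_mono) auto
    thus False using assms(1,5) by (auto simp: abs_le_iff)
  qed
  have "\<bar>d^2 - a^2\<bar> = \<bar>d - a\<bar> * \<bar>d + a\<bar>" by (simp add: power2_eq_square algebra_simps abs_mult[symmetric])
  also have "\<dots> \<le> e * 5"
  proof (rule mult_mono)
    show "\<bar>d + a\<bar> \<le> 5" using assms a2 by (auto simp: abs_le_iff)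
  qed (use assms in auto)
  finally show ?thesis using assms(1) by (auto simp: abs_le_iff)
qed

lemma root_close:
  fixes H B :: real
  assumes "1/4 \<le> H" "0 \<le> B"
  shows "\<bar>sqrt H - sqrt B\<bar> \<le> 2 * \<bar>H - B\<bar>"
proof -
  have h: "sqrt H \<ge> 1/2" using assms real_sqrt_le_mono[of "1/4" H] by (simp add: real_sqrt_divide)
  have "(sqrt H - sqrt B) * (sqrt H + sqrt B) = sqrt H * sqrt H - sqrt B * sqrt B"
    by (simp add: algebra_simps)
  also have "\<dots> = H - B" using assms by simp
  finally have "\<bar>H - B\<bar> = \<bar>sqrt H - sqrt B\<bar> * \<bar>sqrt H + sqrt B\<bar>" by (metis abs_mult)
  also have "\<bar>sqrt H + sqrt B\<bar> = sqrt H + sqrt B" using assms by simp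
  finally have "\<bar>H - B\<bar> = \<bar>sqrt H - sqrt B\<bar> * (sqrt H + sqrt B)" .
  also have "\<dots> \<ge> \<bar>sqrt H - sqrt B\<bar> * (1/2)"
  proof (rule mult_left_mono)
    show "1/2 \<le> sqrt H + sqrt B" using h real_sqrt_ge_zero[OF assms(2)] by linarith
  qed simp
  finally show ?thesis by simp
qed



definition nearreg :: "(nat \<Rightarrow> 'a::euclidean_space) \<Rightarrow> nat \<Rightarrow> real \<Rightarrow> bool" where
  "nearreg v k \<epsilon> \<longleftrightarrow> (\<forall>i<k. \<forall>j<k. i \<noteq> j \<longrightarrow> \<bar>(dist (v i) (v j))^2 - 1\<bar> \<le> \<epsilon>)"

lemma approx_step:
  fixes y v :: "nat \<Rightarrow> 'a::euclidean_space"
  assumes reg: "regk y k" and k: "k \<ge> 1"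
    and near: "nearreg v (Suc k) \<epsilon>" and eps: "0 \<le> \<epsilon>" 
    and close: "\<forall>i<k. dist (y i) (v i) \<le> C * \<epsilon>" and C: "C > 0"
    and small: "\<epsilon> \<le> 1 / (8 * (real k)^2 * (1 + 5 * C))"
  shows "\<exists>y'. regk y' (Suc k) \<and> (\<forall>i<Suc k. dist (y' i) (v i) \<le> ((2 * real k + 4) * (1 + 5 * C) + C) * \<epsilon>)"
proof -
  define K where "K = real k"
  have K1: "K \<ge> 1" using k by (simp add: K_def)
  define \<eta> where "\<eta> = (1 + 5 * C) * \<epsilon>"
  have eta0: "\<eta> \<ge> 0" using eps C by (simp add: \<eta>_def)
  have P: "8 * K^2 * (1 + 5*C) > 0" using K1 C by simp
  have "\<epsilon> * (8 * K^2 * (1 + 5*C)) \<le> 1" using small pos_le_divide_eq[OF P] by (simp add: K_def)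
  moreover have "8 * K^2 * \<eta> = \<epsilon> * (8 * K^2 * (1 + 5*C))" by (simp add: \<eta>_def algebra_simps)
  ultimately have etasmall: "8 * K^2 * \<eta> \<le> 1" by linarith
  have K2: "K^2 \<ge> 1" using K1 by simp
  have eta18: "\<eta> \<le> 1/8" using etasmall mult_right_mono[OF K2 eta0] by linarith
  have Ceps: "C * \<epsilon> \<le> 1" using eta18 eps by (simp add: \<eta>_def algebra_simps)
  have eps1: "\<epsilon> \<le> 1" using eta18 eps C by (simp add: \<eta>_def algebra_simps) (smt (verit) mult_nonneg_nonneg)
  define z where "z = v k"
  define g where "g = cen y k"
  define w where "w = z - g"
  define x where "x i = y i - g" for i
  define J where "J = (K - 1) / (2 * K)"
  have xx: "inner (x i) (x i) = J" if "i < k" for i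
    using gram[OF reg k that that] K1 by (simp add: x_def g_def J_def K_def field_simps)
  have J1: "J \<le> 1/2" "0 \<le> J" using K1 by (auto simp: J_def field_simps)
  have nx: "norm (x i) \<le> 1" if "i < k" for i
  proof -
    have "(norm (x i))^2 \<le> 1^2" using xx[OF that] J1 by (simp add: power2_norm_eq_inner)
    thus ?thesis by (rule power2_le_imp_le) simp
  qed
  define r where "r i = inner (w - x i) (w - x i)" for i
  have rclose: "\<bar>r i - 1\<bar> \<le> \<eta>" if i: "i < k" for i
  proof -
    have "w - x i = z - y i" by (simp add: w_def x_def)
    hence rr: "r i = (dist z (y i))^2" by (simp add: r_def dist_norm power2_norm_eq_inner)
    have a: "\<bar>(dist z (v i))^2 - 1\<bar> \<le> \<epsilon>" using near i by (auto simp: nearreg_def z_def)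
    have "\<bar>dist z (y i) - dist z (v i)\<bar> \<le> dist (y i) (v i)"
      by (smt (verit) dist_commute dist_triangle)
    also have "\<dots> \<le> C * \<epsilon>" using close i by auto
    finally have "\<bar>dist z (y i) - dist z (v i)\<bar> \<le> C * \<epsilon>" .
    from sq_close[OF a this] eps1 Ceps eps C
    have "\<bar>(dist z (y i))^2 - 1\<bar> \<le> \<epsilon> + 5 * (C * \<epsilon>)" by auto
    thus ?thesis using rr by (simp add: \<eta>_def algebra_simps)
  qed
  define W where "W = inner w w"
  have rexp: "r i = W - 2 * inner w (x i) + J" if "i < k" for i
    using xx[OF that] by (simp add: r_def W_def inner_diff_left inner_diff_right inner_commute)
  have swx: "(\<Sum>i<k. inner w (x i)) = 0" using sum_inner_x_zero[OF k, of w y] by (simp add: x_def g_def)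
  have sr: "(\<Sum>i<k. r i) = K * (W + J)"
  proof -
    have "(\<Sum>i<k. r i) = (\<Sum>i<k. W + J - 2 * inner w (x i))" using rexp by (intro sum.cong) auto
    also have "\<dots> = K * (W + J) - 2 * (\<Sum>i<k. inner w (x i))"
      by (simp add: sum_subtractf sum_distrib_left K_def)
    finally show ?thesis using swx by simp
  qed
  have "\<bar>(\<Sum>i<k. r i) - K\<bar> \<le> K * \<eta>"
  proof -
    have "\<bar>(\<Sum>i<k. r i) - K\<bar> = \<bar>(\<Sum>i<k. r i - 1)\<bar>" by (simp add: sum_subtractf K_def)
    also have "\<dots> \<le> (\<Sum>i<k. \<bar>r i - 1\<bar>)" by (rule sum_abs)
    also have "\<dots> \<le> (\<Sum>i<k. \<eta>)" using rclose by (intro sum_mono) auto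
    finally show ?thesis by (simp add: K_def)
  qed
  moreover have "\<bar>K * (W + J) - K\<bar> = K * \<bar>W + J - 1\<bar>"
  proof -
    have "K * (W + J) - K = K * (W + J - 1)" by (simp add: algebra_simps)
    hence "\<bar>K * (W + J) - K\<bar> = \<bar>K\<bar> * \<bar>W + J - 1\<bar>" by (simp add: abs_mult)
    thus ?thesis using K1 by simp
  qed
  ultimately have "K * \<bar>W + J - 1\<bar> \<le> K * \<eta>" using sr by simp
  hence WJ: "\<bar>W + J - 1\<bar> \<le> \<eta>" using K1 by simp
  have wx: "\<bar>2 * inner w (x i)\<bar> \<le> 2 * \<eta>" if "i < k" for i
    using rexp[OF that] rclose[OF that] WJ by (simp add: abs_le_iff) 
  define a where "a = prj y k w"
  have aeq: "a = (\<Sum>i<k. (2 * inner w (x i)) *\<^sub>R x i)"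
    by (simp add: a_def prj_def x_def g_def scaleR_sum_right)
  have na: "norm a \<le> 2 * K * \<eta>"
  proof -
    have "norm a \<le> (\<Sum>i<k. norm ((2 * inner w (x i)) *\<^sub>R x i))" unfolding aeq by (rule norm_sum)
    also have "\<dots> \<le> (\<Sum>i<k. 2 * \<eta>)"
    proof (intro sum_mono)
      fix i assume "i \<in> {..<k}"
      hence i: "i < k" by simp
      have "norm ((2 * inner w (x i)) *\<^sub>R x i) = \<bar>2 * inner w (x i)\<bar> * norm (x i)" by simp
      also have "\<dots> \<le> (2 * \<eta>) * 1" using wx[OF i] nx[OF i] by (intro mult_mono) auto
      finally show "norm ((2 * inner w (x i)) *\<^sub>R x i) \<le> 2 * \<eta>" by simp
    qed
    finally show ?thesis by (simp add: K_def)
  qed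
  define b where "b = w - a"
  have ab: "inner b a = 0" using prj_orth2[OF reg k, of w w] by (simp add: a_def b_def)
  have Wab: "W = inner a a + inner b b"
  proof -
    have "w = a + b" by (simp add: b_def)
    hence "W = inner (a + b) (a + b)" by (simp add: W_def)
    also have "\<dots> = inner a a + 2 * inner b a + inner b b" by (simp add: inner_add_left inner_add_right inner_commute)
    finally show ?thesis using ab by simp
  qed
  define H where "H = (K + 1) / (2 * K)"
  have HJ: "H = 1 - J" using K1 by (simp add: H_def J_def field_simps)
  have aa: "inner a a \<le> 4 * K^2 * \<eta>^2"
  proof -
    have "inner a a = (norm a)^2" by (simp add: power2_norm_eq_inner)
    also have "\<dots> \<le> (2 * K * \<eta>)^2" using na by (intro power_mono) auto
    finally show ?thesis by (simp add: power_mult_distrib)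
  qed
  have aa2: "inner a a \<le> \<eta>"
  proof -
    have "4 * K^2 * \<eta>^2 = (8 * K^2 * \<eta>) * (\<eta> / 2)" by (simp add: power2_eq_square)
    also have "\<dots> \<le> 1 * (\<eta> / 2)" using etasmall eta0 by (intro mult_right_mono) auto
    finally show ?thesis using aa eta0 by simp
  qed
  have BH: "\<bar>inner b b - H\<bar> \<le> 2 * \<eta>"
    using WJ Wab HJ aa2 inner_ge_zero[of a] eta0 unfolding abs_le_iff by linarith
  have H14: "H \<ge> 1/4" using K1 by (simp add: H_def field_simps)
  have H12: "H \<ge> 1/2" using K1 by (simp add: H_def field_simps)
  have B0: "inner b b \<ge> 1/4" using BH eta18 H12 unfolding abs_le_iff by linarith
  hence bnz: "b \<noteq> 0" by auto
  have bdef: "b = w - prj y k w" by (simp add: b_def a_def)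
  define s where "s = sqrt ((real k + 1) / (2 * real k)) / norm b"
  define ynew where "ynew = cen y k + s *\<^sub>R b"
  have reg': "regk (y(k := ynew)) (Suc k)"
    using ext_reg[OF reg k bdef bnz] by (simp add: ynew_def s_def)
  have nbs: "norm b = sqrt (inner b b)" by (simp add: norm_eq_sqrt_inner)
  have hs: "sqrt H - norm b = s * norm b - norm b"
    using bnz by (simp add: s_def H_def K_def)
  have t1: "\<bar>H - inner b b\<bar> \<le> 2 * \<eta>" using BH by (simp add: abs_minus_commute)
  have "\<bar>sqrt H - norm b\<bar> \<le> 2 * \<bar>H - inner b b\<bar>"
    using root_close[OF H14 inner_ge_zero[of b]] unfolding nbs .
  also have "\<dots> \<le> 2 * (2 * \<eta>)" using t1 by simp
  finally have hb: "\<bar>sqrt H - norm b\<bar> \<le> 4 * \<eta>" by simp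
  have "ynew - z = (s - 1) *\<^sub>R b - a"
    by (simp add: ynew_def w_def b_def g_def algebra_simps)
  hence "norm (ynew - z) \<le> norm ((s - 1) *\<^sub>R b) + norm a" by (metis norm_triangle_ineq4)
  also have "norm ((s - 1) *\<^sub>R b) = \<bar>sqrt H - norm b\<bar>"
  proof -
    have "norm ((s - 1) *\<^sub>R b) = \<bar>s - 1\<bar> * \<bar>norm b\<bar>" by simp
    also have "\<dots> = \<bar>(s - 1) * norm b\<bar>" by (rule abs_mult[symmetric])
    also have "(s - 1) * norm b = sqrt H - norm b" using hs by (simp add: left_diff_distrib)
    finally show ?thesis .
  qed
  finally have "norm (ynew - z) \<le> 4 * \<eta> + 2 * K * \<eta>" using hb na by simp
  hence dnew: "dist ynew (v k) \<le> (2 * K + 4) * (1 + 5 * C) * \<epsilon>"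
    by (simp add: dist_norm z_def \<eta>_def algebra_simps)
  show ?thesis
  proof (intro exI conjI allI impI)
    show "regk (y(k := ynew)) (Suc k)" by (rule reg')
    fix i assume i: "i < Suc k"
    show "dist ((y(k := ynew)) i) (v i) \<le> ((2 * real k + 4) * (1 + 5 * C) + C) * \<epsilon>"
    proof (cases "i = k")
      case True
      have "0 \<le> C * \<epsilon>" using eps C by simp
      moreover have "((2 * real k + 4) * (1 + 5 * C) + C) * \<epsilon> = (2 * K + 4) * (1 + 5 * C) * \<epsilon> + C * \<epsilon>"
        by (simp add: K_def algebra_simps)
      ultimately show ?thesis using dnew True by simp
    next
      case False
      hence "i < k" using i by simp
      hence "dist (y i) (v i) \<le> C * \<epsilon>" using close by auto
      moreover have "0 \<le> (2 * real k + 4) * (1 + 5 * C) * \<epsilon>" using eps C by simp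
      ultimately show ?thesis using False by (simp add: algebra_simps)
    qed
  qed
qed

lemma nearreg_mono: "nearreg v (Suc k) \<epsilon> \<Longrightarrow> nearreg v k \<epsilon>"
  by (auto simp: nearreg_def)

lemma approx_reg:
  "k \<ge> 1 \<Longrightarrow> \<exists>\<delta>>0. \<exists>C>0. \<forall>(v::nat \<Rightarrow> 'a::euclidean_space) \<epsilon>. 0 \<le> \<epsilon> \<and> \<epsilon> \<le> \<delta> \<and> nearreg v k \<epsilon>
      \<longrightarrow> (\<exists>y. regk y k \<and> (\<forall>i<k. dist (y i) (v i) \<le> C * \<epsilon>))"
proof (induction k)
  case 0 thus ?case by simp
next
  case (Suc k)
  show ?case
  proof (cases "k = 0")
    case True
    show ?thesis
    proof (intro exI[of _ 1] conjI allI impI exI[of _ "1::real"])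
      fix v :: "nat \<Rightarrow> 'a" and \<epsilon> :: real
      assume "0 \<le> \<epsilon> \<and> \<epsilon> \<le> 1 \<and> nearreg v (Suc k) \<epsilon>"
      thus "\<exists>y. regk y (Suc k) \<and> (\<forall>i<Suc k. dist (y i) (v i) \<le> 1 * \<epsilon>)"
        using True by (intro exI[of _ v]) (auto simp: regk_def)
    qed auto
  next
    case False
    hence k: "k \<ge> 1" by simp
    obtain \<delta> C where d: "\<delta> > 0" and C: "C > 0" and
      H: "\<And>(v::nat \<Rightarrow> 'a) \<epsilon>. 0 \<le> \<epsilon> \<Longrightarrow> \<epsilon> \<le> \<delta> \<Longrightarrow> nearreg v k \<epsilon>
      \<Longrightarrow> (\<exists>y. regk y k \<and> (\<forall>i<k. dist (y i) (v i) \<le> C * \<epsilon>))"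
      using Suc.IH[OF k] by blast
    define \<delta>' where "\<delta>' = min \<delta> (1 / (8 * (real k)^2 * (1 + 5 * C)))"
    define C' where "C' = (2 * real k + 4) * (1 + 5 * C) + C"
    have d': "\<delta>' > 0" using d C k by (simp add: \<delta>'_def)
    have C': "C' > 0" using C by (simp add: C'_def add_pos_pos)
    show ?thesis
    proof (rule exI[of _ \<delta>'], rule conjI[OF d'], rule exI[of _ C'], rule conjI[OF C'], intro allI impI)
      fix v :: "nat \<Rightarrow> 'a" and \<epsilon> :: real
      assume a: "0 \<le> \<epsilon> \<and> \<epsilon> \<le> \<delta>' \<and> nearreg v (Suc k) \<epsilon>"
      then obtain y where y: "regk y k" "\<forall>i<k. dist (y i) (v i) \<le> C * \<epsilon>"
        using H[of \<epsilon> v] nearreg_mono[of v k \<epsilon>] by (auto simp: \<delta>'_def)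
      have sm: "\<epsilon> \<le> 1 / (8 * (real k)^2 * (1 + 5 * C))" using a by (simp add: \<delta>'_def)
      from approx_step[OF y(1) k _ _ y(2) C sm] a
      show "\<exists>y. regk y (Suc k) \<and> (\<forall>i<Suc k. dist (y i) (v i) \<le> C' * \<epsilon>)"
        by (simp add: C'_def)
    qed
  qed
qed



lemma sup_attained:
  fixes S :: "'a::euclidean_space set"
  assumes S: "compact S" "S \<noteq> {}"
  shows "\<exists>y\<in>S. (SUP x\<in>S. dist c x) = dist c y \<and> (\<forall>x\<in>S. dist c x \<le> dist c y)"
proof -
  have "continuous_on S (dist c)" by (intro continuous_intros)
  from continuous_attains_sup[OF S this] obtain y where y: "y \<in> S" "\<forall>x\<in>S. dist c x \<le> dist c y" by auto
  have "(SUP x\<in>S. dist c x) = dist c y"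
    using y by (intro cSup_eq_maximum) auto
  thus ?thesis using y by auto
qed

lemma kkt:
  fixes S :: "'a::euclidean_space set"
  assumes S: "compact S" "S \<noteq> {}"
  shows "\<exists>c R T l. cheb_rad S \<le> R \<and> (\<forall>x\<in>S. dist x c \<le> R) \<and> finite T \<and> T \<subseteq> S
    \<and> card T \<le> DIM('a) + 1 \<and> (\<forall>t\<in>T. dist t c = R) \<and> (\<forall>t\<in>T. 0 \<le> l t) \<and> sum l T = 1
    \<and> (\<Sum>t\<in>T. l t *\<^sub>R t) = c"
proof -
  define f where "f c = (SUP x\<in>S. dist c x)" for c :: 'a
  have fat: "\<exists>y\<in>S. f c = dist c y \<and> (\<forall>x\<in>S. dist c x \<le> f c)" for c
    using sup_attained[OF S, of c] by (auto simp: f_def)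
  have fge: "dist c x \<le> f c" if "x \<in> S" for c x using fat[of c] that by auto
  have flip: "f c \<le> f c' + dist c c'" for c c'
  proof -
    obtain y where y: "y \<in> S" "f c = dist c y" using fat[of c] by auto
    have "dist c y \<le> dist c' y + dist c c'" by (metis dist_commute dist_triangle)
    thus ?thesis using y fge[OF y(1), of c'] by linarith
  qed
  have "1-lipschitz_on UNIV f"
  proof (rule lipschitz_onI)
    fix c c' :: 'a
    show "dist (f c) (f c') \<le> 1 * dist c c'"
      using flip[of c c'] flip[of c' c] by (simp add: dist_real_def dist_commute abs_le_iff)
  qed simp
  hence fcont: "continuous_on UNIV f" by (rule lipschitz_on_continuous_on)
  obtain x0 where x0: "x0 \<in> S" using S by auto
  have f0: "0 \<le> f c" for c using fge[OF x0, of c] zero_le_dist[of c x0] by linarith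
  have Kne: "cball x0 (f x0) \<noteq> {}" using f0[of x0] by auto
  obtain c where c: "c \<in> cball x0 (f x0)" "\<forall>c'\<in>cball x0 (f x0). f c \<le> f c'"
    using continuous_attains_inf[OF compact_cball Kne continuous_on_subset[OF fcont]] by auto
  have cmin: "f c \<le> f c'" for c'
  proof (cases "c' \<in> cball x0 (f x0)")
    case True thus ?thesis using c by auto
  next
    case False
    hence "f x0 < dist x0 c'" by simp
    moreover have "f c \<le> f x0" using c(2) f0[of x0] by auto
    moreover have "dist x0 c' \<le> f c'" using fge[OF x0, of c'] by (simp add: dist_commute)
    ultimately show ?thesis by simp
  qed
  define R where "R = f c"
  have cheb: "cheb_rad S \<le> R"
  proof -
    have "bdd_below (range f)" by (rule bdd_belowI2[where m=0]) (rule f0)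
    hence "(INF c. f c) \<le> f c" by (rule cINF_lower) simp
    thus ?thesis by (simp add: cheb_rad_def f_def R_def)
  qed
  have inball: "\<forall>x\<in>S. dist x c \<le> R" using fge by (simp add: R_def dist_commute)
  define A where "A = {x\<in>S. dist x c = R}"
  have Ane: "A \<noteq> {}" using fat[of c] by (auto simp: A_def R_def dist_commute)
  have Acomp: "compact A"
  proof -
    have "closed {x. dist x c = R}" by (intro closed_Collect_eq continuous_intros)
    hence "compact (S \<inter> {x. dist x c = R})" by (rule compact_Int_closed[OF S(1)])
    moreover have "A = S \<inter> {x. dist x c = R}" by (auto simp: A_def)
    ultimately show ?thesis by simp
  qed
  have chull: "c \<in> convex hull A"
  proof (rule ccontr)
    assume nc: "c \<notin> convex hull A"
    have "closed (convex hull A)" using compact_convex_hull[OF Acomp] by (rule compact_imp_closed)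
    from separating_hyperplane_closed_point[OF convex_convex_hull this nc]
    obtain u b where ub: "inner u c < b" "\<forall>x\<in>convex hull A. b < inner u x" by auto
    define d0 where "d0 = b - inner u c"
    have d0: "d0 > 0" using ub by (simp add: d0_def)
    have Ain: "inner u (x - c) > d0" if "x \<in> A" for x
      using ub(2) hull_subset[of A convex] that by (auto simp: d0_def inner_diff_right)
    obtain a0 where a0: "a0 \<in> A" using Ane by auto
    have unz: "u \<noteq> 0" using Ain[OF a0] d0 by auto
    hence nu: "norm u > 0" by simp
    define S2 where "S2 = {x\<in>S. inner u (x - c) \<le> d0 / 2}"
    have S2comp: "compact S2"
    proof -
      have "closed {x. inner u (x - c) \<le> d0 / 2}" by (intro closed_Collect_le continuous_intros)
      hence "compact (S \<inter> {x. inner u (x - c) \<le> d0 / 2})" by (rule compact_Int_closed[OF S(1)])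
      moreover have "S2 = S \<inter> {x. inner u (x - c) \<le> d0 / 2}" by (auto simp: S2_def)
      ultimately show ?thesis by simp
    qed
    have S2lt: "dist x c < R" if "x \<in> S2" for x
    proof -
      have "x \<in> S" "inner u (x - c) \<le> d0 / 2" using that by (auto simp: S2_def)
      moreover have "x \<notin> A" using Ain[of x] calculation d0 by auto
      ultimately show ?thesis using inball by (auto simp: A_def)
    qed
    obtain R2 where R2: "R2 < R" "\<forall>x\<in>S2. dist x c \<le> R2"
    proof (cases "S2 = {}")
      case True thus ?thesis using that[of "R - 1"] by auto
    next
      case False
      have "continuous_on S2 (\<lambda>x. dist x c)" by (intro continuous_intros)
      from continuous_attains_sup[OF S2comp False this] obtain m where
        m: "m \<in> S2" "\<forall>x\<in>S2. dist x c \<le> dist m c" by auto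
      show ?thesis using that[of "dist m c"] S2lt[OF m(1)] m(2) by auto
    qed
    define t where "t = min ((R - R2) / (2 * norm u)) (d0 / (norm u)^2)"
    have t0: "t > 0" using R2 nu d0 by (simp add: t_def)
    define ct where "ct = c + t *\<^sub>R u"
    have lt: "dist ct x < R" if x: "x \<in> S" for x
    proof (cases "x \<in> S2")
      case True
      have t1: "dist ct x \<le> dist c x + dist c ct" by (metis dist_commute dist_triangle)
      have t2: "dist c ct = t * norm u" using t0 by (simp add: ct_def dist_norm)
      have "t * norm u \<le> (R - R2) / (2 * norm u) * norm u"
        using nu by (intro mult_right_mono) (auto simp: t_def)
      also have "\<dots> = (R - R2) / 2" using nu by simp
      finally have "dist ct x \<le> dist c x + (R - R2) / 2" using t1 t2 by linarith
      moreover have "dist c x \<le> R2" using R2(2) True by (metis dist_commute)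
      ultimately have "dist ct x \<le> R2 + (R - R2) / 2" by linarith
      also have "\<dots> < R" using R2(1) by (simp add: field_simps)
      finally show ?thesis .
    next
      case False
      hence ip: "inner u (x - c) > d0 / 2" using x by (auto simp: S2_def)
      have e: "x - ct = (x - c) - t *\<^sub>R u" by (simp add: ct_def algebra_simps)
      have dn: "dist ct x = norm (x - ct)" by (metis dist_commute dist_norm)
      have "(dist ct x)^2 = inner ((x - c) - t *\<^sub>R u) ((x - c) - t *\<^sub>R u)"
        unfolding dn power2_norm_eq_inner e ..
      also have "\<dots> = inner (x - c) (x - c) - 2 * t * inner (x - c) u + t * t * inner u u"
        by (rule inner_diff_scale)
      also have "inner (x - c) (x - c) = (dist x c)^2" by (simp add: dist_norm power2_norm_eq_inner)
      also have "t * t * inner u u = t * (t * (norm u)^2)" by (simp add: power2_norm_eq_inner)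
      also have "t * (t * (norm u)^2) \<le> t * d0"
      proof (rule mult_left_mono)
        have "t * (norm u)^2 \<le> d0 / (norm u)^2 * (norm u)^2"
          by (intro mult_right_mono) (auto simp: t_def)
        thus "t * (norm u)^2 \<le> d0" using nu by simp
      qed (use t0 in simp)
      finally have "(dist ct x)^2 \<le> (dist x c)^2 - 2 * t * inner (x - c) u + t * d0" by simp
      moreover have "2 * t * inner (x - c) u > t * d0"
      proof -
        have "2 * inner (x - c) u > d0" using ip by (simp add: inner_commute)
        hence "t * (2 * inner (x - c) u) > t * d0" using t0 by simp
        thus ?thesis by (simp add: algebra_simps)
      qed
      moreover have "(dist x c)^2 \<le> R^2" using inball x by (intro power_mono) auto
      ultimately have "(dist ct x)^2 < R^2" by linarith
      moreover have "0 \<le> R" using f0[of c] by (simp add: R_def)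
      ultimately show ?thesis by (rule power_less_imp_less_base)
    qed
    obtain y where y: "y \<in> S" "f ct = dist ct y" using fat[of ct] by auto
    have "f ct < R" using lt[OF y(1)] y(2) by simp
    thus False using cmin[of ct] by (simp add: R_def)
  qed
  from chull obtain T where T: "finite T" "T \<subseteq> A" "card T \<le> DIM('a) + 1" "c \<in> convex hull T"
    using caratheodory[of A] by auto
  from T(4) obtain l where l: "\<forall>x\<in>T. 0 \<le> l x" "sum l T = 1" "(\<Sum>x\<in>T. l x *\<^sub>R x) = c"
    using convex_hull_finite[OF T(1)] by auto
  show ?thesis
    apply (rule exI[of _ c], rule exI[of _ R], rule exI[of _ T], rule exI[of _ l])
    using cheb inball T l by (auto simp: A_def)
qed



lemma Jung_sq: "(Jung d)^2 = real d / (2 * (real d + 1))"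
  by (simp add: Jung_def)

lemma Jung_nonneg: "Jung d \<ge> 0" by (simp add: Jung_def)

lemma double_sum_dist:
  fixes T :: "'a::euclidean_space set"
  assumes fin: "finite T" and l1: "sum l T = 1" and lc: "(\<Sum>t\<in>T. l t *\<^sub>R t) = c"
    and dR: "\<forall>t\<in>T. dist t c = R"
  shows "(\<Sum>t\<in>T. \<Sum>t'\<in>T. l t * l t' * (dist t t')^2) = 2 * R^2"
proof -
  define u where "u t = t - c" for t
  have su: "(\<Sum>t\<in>T. l t *\<^sub>R u t) = 0"
    by (simp add: u_def scaleR_diff_right sum_subtractf lc l1 flip: scaleR_left.sum)
  have uu: "inner (u t) (u t) = R^2" if "t \<in> T" for t
    using dR that by (simp add: u_def power2_norm_eq_inner[symmetric] dist_norm)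
  have ex: "(dist t t')^2 = inner (u t) (u t) + inner (u t') (u t') - 2 * inner (u t) (u t')" for t t'
  proof -
    have "t - t' = u t - u t'" by (simp add: u_def)
    hence "(dist t t')^2 = inner (u t - u t') (u t - u t')" by (simp add: dist_norm power2_norm_eq_inner)
    thus ?thesis by (simp add: inner_diff_left inner_diff_right inner_commute)
  qed
  have "(\<Sum>t\<in>T. \<Sum>t'\<in>T. l t * l t' * (dist t t')^2)
      = (\<Sum>t\<in>T. \<Sum>t'\<in>T. l t * l t' * (2 * R^2) - 2 * inner (l t *\<^sub>R u t) (l t' *\<^sub>R u t'))"
    using uu by (intro sum.cong refl) (simp add: ex algebra_simps)
  also have "\<dots> = (\<Sum>t\<in>T. \<Sum>t'\<in>T. l t * l t' * (2 * R^2)) - 2 * (\<Sum>t\<in>T. \<Sum>t'\<in>T. inner (l t *\<^sub>R u t) (l t' *\<^sub>R u t'))"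
    by (simp add: sum_subtractf sum_distrib_left)
  also have "(\<Sum>t\<in>T. \<Sum>t'\<in>T. inner (l t *\<^sub>R u t) (l t' *\<^sub>R u t')) = inner (\<Sum>t\<in>T. l t *\<^sub>R u t) (\<Sum>t'\<in>T. l t' *\<^sub>R u t')"
    unfolding inner_sum_left inner_sum_right by (rule sum.swap)
  also have "(\<Sum>t\<in>T. \<Sum>t'\<in>T. l t * l t' * (2 * R^2)) = (\<Sum>t\<in>T. (\<Sum>t'\<in>T. l t') * (l t * (2 * R^2)))"
  proof (rule sum.cong[OF refl])
    fix t show "(\<Sum>t'\<in>T. l t * l t' * (2 * R^2)) = (\<Sum>t'\<in>T. l t') * (l t * (2 * R^2))"
      unfolding sum_distrib_right by (simp add: algebra_simps)
  qed
  also have "\<dots> = (\<Sum>t\<in>T. l t * (2 * R^2))" using l1 by simp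
  also have "\<dots> = 2 * R^2" using l1 by (simp add: sum_distrib_right[symmetric])
  finally show ?thesis using su by simp
qed

lemma sumsq_ge:
  fixes l :: "'a \<Rightarrow> real"
  assumes "finite T" "card T = n" "n > 0" "sum l T = 1"
  shows "(\<Sum>t\<in>T. (l t - 1 / real n)^2) = (\<Sum>t\<in>T. (l t)^2) - 1 / real n"
proof -
  have "(\<Sum>t\<in>T. (l t - 1 / real n)^2) = (\<Sum>t\<in>T. ((l t)^2 + 1 / (real n)^2) - (2 / real n) * l t)"
    by (intro sum.cong refl) (simp add: power2_eq_square algebra_simps)
  also have "\<dots> = (\<Sum>t\<in>T. (l t)^2) + (\<Sum>t\<in>T. 1 / (real n)^2) - (2 / real n) * sum l T"
    by (simp only: sum_subtractf sum.distrib sum_distrib_left)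
  also have "(\<Sum>t\<in>T. 1 / (real n)^2) = real n / (real n)^2" using assms by simp
  also have "real n / (real n)^2 = 1 / real n" by (simp add: power2_eq_square)
  also have "(\<Sum>t\<in>T. (l t)^2) + 1 / real n - 2 / real n * sum l T = (\<Sum>t\<in>T. (l t)^2) - 1 / real n"
    using assms by (simp add: field_simps)
  finally show ?thesis .
qed



lemma arith_C:
  fixes d :: real
  assumes "d \<ge> 1" "0 \<le> e" "e \<le> 1 / (4 * (d+1)^2)"
  shows "(1 + e) * ((d - 1) / d) < d / (d + 1)"
proof -
  have "(1 + e) * ((d - 1) / d) \<le> (1 + 1 / (4 * (d+1)^2)) * ((d - 1) / d)"
    using assms by (intro mult_right_mono) auto
  also have "\<dots> < d / (d + 1)"
  proof -
    have p: "0 < 4 + (d * 8 + d * (d * 4))" using assms by (simp add: add_pos_nonneg)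
    have "d * d - 1 < 4 + (d * 8 + d * (d * 4))" using assms zero_le_square[of d] by linarith
    hence "(d * d - 1) / (4 + (d * 8 + d * (d * 4))) < 1" using p by simp
    thus ?thesis using assms by (simp add: field_simps power2_eq_square)
  qed
  finally show ?thesis .
qed

lemma single_le_double:
  fixes g :: "'b \<Rightarrow> 'b \<Rightarrow> real"
  assumes "finite T" "t \<in> T" "t' \<in> T" "\<forall>a\<in>T. \<forall>b\<in>T. 0 \<le> g a b"
  shows "g t t' \<le> (\<Sum>a\<in>T. \<Sum>b\<in>T. g a b)"
proof -
  have "g t t' \<le> (\<Sum>b\<in>T. g t b)" using assms by (intro member_le_sum) auto
  also have "\<dots> \<le> (\<Sum>a\<in>T. \<Sum>b\<in>T. g a b)" using assms by (intro member_le_sum sum_nonneg) auto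
  finally show ?thesis .
qed

lemma weights_near:
  fixes T :: "'a::euclidean_space set"
  assumes fin: "finite T" and cardT: "card T \<le> DIM('a) + 1" and l0: "\<forall>t\<in>T. 0 \<le> l t" and l1: "sum l T = 1"
    and lc: "(\<Sum>t\<in>T. l t *\<^sub>R t) = c" and dR: "\<forall>t\<in>T. dist t c = R" and RJ: "Jung DIM('a) \<le> R"
    and diam: "\<forall>t\<in>T. \<forall>t'\<in>T. dist t t' \<le> 1 + \<beta>" and b0: "0 \<le> \<beta>"
    and b1: "\<beta> \<le> 1 / (12 * (real DIM('a) + 1)^2)"
  shows "card T = DIM('a) + 1" "R \<le> Jung DIM('a) * (1 + \<beta>)"
    "\<forall>t\<in>T. \<forall>t'\<in>T. t \<noteq> t' \<longrightarrow> 1 - 12 * (real DIM('a) + 1)^2 * \<beta> \<le> (dist t t')^2"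
proof -
  define d where "d = real DIM('a)"
  define m where "m = d + 1"
  have d1: "d \<ge> 1" using DIM_positive[where 'a='a] by (simp add: d_def)
  have m1: "m \<ge> 2" using d1 by (simp add: m_def)
  have mdef': "m = real DIM('a) + 1" by (simp add: m_def d_def)
  have b1': "\<beta> \<le> 1 / (12 * m^2)" using b1 by (simp add: mdef')
  have m2pos: "12 * m^2 > 0" using m1 by simp
  have m2b: "\<beta> * (12 * m^2) \<le> 1" using b1' pos_le_divide_eq[OF m2pos] by simp
  have msq: "m^2 \<ge> 1" using m1 by (simp add: one_le_power)
  have bl1: "\<beta> \<le> 1" using m2b mult_left_mono[OF msq b0] b0 by linarith
  define D2 where "D2 = (1 + \<beta>)^2"
  define E where "E = D2 - 1"
  have Eexp: "E = 2 * \<beta> + \<beta> * \<beta>" by (simp add: E_def D2_def power2_eq_square algebra_simps)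
  have E0: "E \<ge> 0" using b0 by (simp add: Eexp)
  have "\<beta> * \<beta> \<le> \<beta> * 1" using bl1 b0 by (intro mult_left_mono) auto
  hence E3: "E \<le> 3 * \<beta>" using Eexp by linarith
  have E4: "E \<le> 1 / (4 * m^2)"
  proof -
    have "3 * \<beta> \<le> 3 * (1 / (12 * m^2))" using b1' by simp
    also have "3 * (1 / (12 * m^2)) = 1 / (4 * m^2)" by simp
    finally show ?thesis using E3 by linarith
  qed
  have D2E: "D2 = 1 + E" by (simp add: E_def)
  have D21: "D2 \<ge> 1" using E0 D2E by simp
  define Q where "Q = (\<Sum>t\<in>T. (l t)^2)"
  have F1: "(\<Sum>t\<in>T. \<Sum>t'\<in>T. l t * l t' * (dist t t')^2) = 2 * R^2"
    by (rule double_sum_dist[OF fin l1 lc dR])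
  define g where "g t t' = l t * l t' * (D2 - (dist t t')^2) - (if t = t' then (l t)^2 * D2 else 0)" for t t'
  have gnn: "\<forall>a\<in>T. \<forall>b\<in>T. 0 \<le> g a b"
  proof (intro ballI)
    fix a b assume ab: "a \<in> T" "b \<in> T"
    show "0 \<le> g a b"
    proof (cases "a = b")
      case True thus ?thesis by (simp add: g_def power2_eq_square)
    next
      case False
      have "(dist a b)^2 \<le> D2" unfolding D2_def using diam ab by (intro power_mono) auto
      hence "0 \<le> l a * l b * (D2 - (dist a b)^2)" using l0 ab by (intro mult_nonneg_nonneg) auto
      thus ?thesis using False by (simp add: g_def)
    qed
  qed
  have Gsum: "(\<Sum>a\<in>T. \<Sum>b\<in>T. g a b) = D2 * (1 - Q) - 2 * R^2"
  proof -
    have "(\<Sum>a\<in>T. \<Sum>b\<in>T. g a b) = (\<Sum>a\<in>T. \<Sum>b\<in>T. l a * l b * D2) - (\<Sum>a\<in>T. \<Sum>b\<in>T. l a * l b * (dist a b)^2)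
       - (\<Sum>a\<in>T. \<Sum>b\<in>T. (if a = b then (l a)^2 * D2 else 0))"
      by (simp add: g_def sum_subtractf right_diff_distrib)
    also have "(\<Sum>a\<in>T. \<Sum>b\<in>T. l a * l b * D2) = (\<Sum>a\<in>T. (\<Sum>b\<in>T. l b) * (l a * D2))"
    proof (rule sum.cong[OF refl])
      fix a show "(\<Sum>b\<in>T. l a * l b * D2) = (\<Sum>b\<in>T. l b) * (l a * D2)"
        unfolding sum_distrib_right by (simp add: algebra_simps)
    qed
    also have "\<dots> = (sum l T * sum l T) * D2" using l1 by (simp add: sum_distrib_right[symmetric])
    also have "(\<Sum>a\<in>T. \<Sum>b\<in>T. (if a = b then (l a)^2 * D2 else 0)) = (\<Sum>a\<in>T. (l a)^2 * D2)"
      using fin by (intro sum.cong refl) simp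
    also have "\<dots> = Q * D2" by (simp add: Q_def sum_distrib_right)
    finally show ?thesis using F1 l1 by (simp add: algebra_simps)
  qed
  have "0 \<le> (\<Sum>a\<in>T. \<Sum>b\<in>T. g a b)" using gnn by (intro sum_nonneg) auto
  hence G0: "2 * R^2 \<le> D2 * (1 - Q)" using Gsum by simp
  have Tne: "T \<noteq> {}" using l1 by auto
  define n where "n = card T"
  have n1: "n \<ge> 1" using Tne fin by (simp add: n_def Suc_le_eq card_gt_0_iff)
  have Qn: "Q \<ge> 1 / real n"
  proof -
    have "(\<Sum>t\<in>T. (l t - 1 / real n)^2) = Q - 1 / real n"
      using sumsq_ge[OF fin refl _ l1] n1 by (simp add: Q_def n_def)
    moreover have "0 \<le> (\<Sum>t\<in>T. (l t - 1 / real n)^2)" by (intro sum_nonneg) simp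
    ultimately show ?thesis by simp
  qed
  have R2J: "R^2 \<ge> d / (2 * m)"
  proof -
    have "(Jung DIM('a))^2 \<le> R^2" using RJ Jung_nonneg by (intro power_mono) auto
    thus ?thesis by (simp add: Jung_sq d_def m_def)
  qed
  have dm2: "d / m = 2 * (d / (2 * m))" by simp
  have main: "d / m \<le> D2 * (1 - Q)" using R2J G0 dm2 by linarith
  show card: "card T = DIM('a) + 1"
  proof (rule ccontr)
    assume "card T \<noteq> DIM('a) + 1"
    hence nd: "real n \<le> d" using cardT by (simp add: n_def d_def)
    have "1 / d \<le> 1 / real n" using nd n1 d1 by (intro divide_left_mono) auto
    moreover have "(d - 1) / d = 1 - 1 / d" using d1 by (simp add: field_simps)
    ultimately have "1 - Q \<le> (d - 1) / d" using Qn by linarith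
    hence A: "D2 * (1 - Q) \<le> D2 * ((d - 1) / d)" using D21 by (intro mult_left_mono) auto
    have B: "(1 + E) * ((d - 1) / d) < d / (d + 1)"
      by (rule arith_C[OF d1 E0]) (use E4 in \<open>simp add: m_def\<close>)
    show False using main A B D2E by (simp add: m_def)
  qed
  have nm: "real n = m" using card by (simp add: n_def mdef')
  have mm: "d / m = 1 - 1 / m" using m1 by (simp add: m_def field_simps)
  have Qm: "1 - Q \<le> d / m" using Qn nm mm by simp
  have DQ: "D2 * (1 - Q) \<le> D2 * (d / m)" using Qm D21 by (intro mult_left_mono) auto
  show "R \<le> Jung DIM('a) * (1 + \<beta>)"
  proof -
    have "(Jung DIM('a) * (1 + \<beta>))^2 = (Jung DIM('a))^2 * D2" by (simp only: power_mult_distrib D2_def)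
    also have "\<dots> = d / (2 * m) * D2" by (simp add: Jung_sq d_def m_def)
    also have "\<dots> = D2 * (d / m) / 2" by (simp add: algebra_simps)
    finally have J2: "(Jung DIM('a) * (1 + \<beta>))^2 = D2 * (d / m) / 2" .
    have J3: "2 * (Jung DIM('a) * (1 + \<beta>))^2 = D2 * (d / m)" unfolding J2 by simp
    have "R^2 \<le> (Jung DIM('a) * (1 + \<beta>))^2" using J3 G0 DQ by linarith
    thus ?thesis by (rule power2_le_imp_le) (use Jung_nonneg b0 in simp)
  qed
  have lam: "l t \<ge> 1 / (2 * m)" if t: "t \<in> T" for t
  proof -
    have S1: "(\<Sum>t\<in>T. (l t - 1 / m)^2) = Q - 1 / m"
      using sumsq_ge[OF fin refl _ l1] n1 nm by (simp add: Q_def n_def)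
    have S2: "Q - 1 / m \<le> E"
    proof -
      have "d / (m * D2) = (d / m) / D2" by simp
      also have "\<dots> \<le> (D2 * (1 - Q)) / D2" using main D21 by (intro divide_right_mono) auto
      also have "\<dots> = 1 - Q" using D21 by simp
      finally have "d / (m * D2) \<le> 1 - Q" .
      hence "Q - 1 / m \<le> 1 - 1 / m - d / (m * D2)" by simp
      also have "1 - 1 / m - d / (m * D2) = (d / m) * (E / D2)"
      proof -
        have e1: "E / D2 = 1 - 1 / D2" using D21 by (simp add: E_def diff_divide_distrib)
        have e2: "d / (m * D2) = (d / m) * (1 / D2)" by simp
        have "1 - 1 / m = d / m" using mm by simp
        thus ?thesis unfolding e1 e2 by (simp add: right_diff_distrib)
      qed
      also have "\<dots> \<le> 1 * E"
      proof (rule mult_mono)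
        show "d / m \<le> 1" using m1 by (simp add: m_def)
        show "E / D2 \<le> E" using divide_left_mono[OF D21 E0] D21 by simp
      qed (use E0 D21 in auto)
      finally show ?thesis by simp
    qed
    have S3: "(l t - 1 / m)^2 \<le> (\<Sum>t\<in>T. (l t - 1 / m)^2)"
      using fin t by (intro member_le_sum) auto
    have S4: "(1 / (2 * m))^2 = 1 / (4 * m^2)" by (simp add: power2_eq_square)
    have "(l t - 1 / m)^2 \<le> (1 / (2 * m))^2" using S1 S2 S3 S4 E4 by linarith
    hence "\<bar>l t - 1 / m\<bar> \<le> \<bar>1 / (2 * m)\<bar>" unfolding abs_le_square_iff .
    hence "\<bar>l t - 1 / m\<bar> \<le> 1 / (2 * m)" using m1 by simp
    moreover have "1 / m - 1 / (2 * m) = 1 / (2 * m)" using m1 by (simp add: field_simps)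
    ultimately show ?thesis by (simp add: abs_le_iff)
  qed
  show "\<forall>t\<in>T. \<forall>t'\<in>T. t \<noteq> t' \<longrightarrow> 1 - 12 * (real DIM('a) + 1)^2 * \<beta> \<le> (dist t t')^2"
  proof (intro ballI impI)
    fix t t' assume tt: "t \<in> T" "t' \<in> T" "t \<noteq> t'"
    have "g t t' \<le> D2 * (1 - Q) - 2 * R^2" using single_le_double[OF fin tt(1,2) gnn] Gsum by simp
    also have "\<dots> \<le> D2 * (d / m) - d / m" using DQ R2J dm2 by linarith
    also have "\<dots> = (d / m) * E"
    proof -
      have "(d / m) * E = (d / m) * D2 - (d / m) * 1" by (simp only: E_def right_diff_distrib)
      moreover have "(d / m) * D2 = D2 * (d / m)" by (rule mult.commute)
      ultimately show ?thesis by simp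
    qed
    also have "\<dots> \<le> 1 * E" using m1 E0 by (intro mult_right_mono) (auto simp: m_def)
    finally have gE: "l t * l t' * (D2 - (dist t t')^2) \<le> E" using tt(3) by (simp add: g_def)
    have dd: "0 \<le> D2 - (dist t t')^2"
    proof -
      have "(dist t t')^2 \<le> D2" unfolding D2_def using diam tt by (intro power_mono) auto
      thus ?thesis by simp
    qed
    have ll: "1 / (2 * m) * (1 / (2 * m)) \<le> l t * l t'"
      using lam[OF tt(1)] lam[OF tt(2)] m1 l0 tt by (intro mult_mono) auto
    have "1 / (2 * m) * (1 / (2 * m)) * (D2 - (dist t t')^2) \<le> E"
      using mult_right_mono[OF ll dd] gE by linarith
    moreover have "1 / (2 * m) * (1 / (2 * m)) * (D2 - (dist t t')^2) = (D2 - (dist t t')^2) / (4 * (m * m))"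
      by simp
    ultimately have "(D2 - (dist t t')^2) / (4 * (m * m)) \<le> E" by simp
    hence "D2 - (dist t t')^2 \<le> E * (4 * (m * m))" using m1 by (simp add: pos_divide_le_eq)
    also have "\<dots> \<le> (3 * \<beta>) * (4 * (m * m))" using E3 by (intro mult_right_mono) auto
    finally have "D2 - (dist t t')^2 \<le> 12 * m^2 * \<beta>" by (simp add: power2_eq_square algebra_simps)
    thus "1 - 12 * (real DIM('a) + 1)^2 * \<beta> \<le> (dist t t')^2"
      using D21 by (simp add: mdef')
  qed
qed



lemma reg_sq_x:
  assumes "regk y n" "n \<ge> 1" "k < n"
  shows "inner (y k - cen y n) (y k - cen y n) = (real n - 1) / (2 * real n)"
  using gram[OF assms(1,2,3,3)] assms(2) by (simp add: field_simps)

lemma frac_half: "(real n - 1) / (2 * real n) \<le> 1 / 2"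
proof (cases "n = 0")
  case False thus ?thesis by (simp add: field_simps)
qed simp

lemma reg_norm_x:
  assumes "regk y n" "n \<ge> 1" "k < n"
  shows "norm (y k - cen y n) \<le> 1"
proof -
  have a: "(norm (y k - cen y n))^2 = (real n - 1) / (2 * real n)"
    using reg_sq_x[OF assms] by (simp add: power2_norm_eq_inner)
  have "(norm (y k - cen y n))^2 \<le> 1^2"
    unfolding a power_one using frac_half[of n] by linarith
  thus ?thesis by (rule power2_le_imp_le) simp
qed

lemma norm_comb:
  fixes x :: "nat \<Rightarrow> 'a::real_normed_vector"
  assumes "\<forall>k<n. norm (x k) \<le> 1"
  shows "norm (\<Sum>k<n. s k *\<^sub>R x k) \<le> (\<Sum>k<n. \<bar>s k\<bar>)"
proof -
  have "norm (\<Sum>k<n. s k *\<^sub>R x k) \<le> (\<Sum>k<n. norm (s k *\<^sub>R x k))" by (rule norm_sum)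
  also have "\<dots> \<le> (\<Sum>k<n. \<bar>s k\<bar>)"
  proof (rule sum_mono)
    fix k assume "k \<in> {..<n}"
    hence "norm (x k) \<le> 1" using assms by auto
    hence "\<bar>s k\<bar> * norm (x k) \<le> \<bar>s k\<bar> * 1" by (intro mult_left_mono) auto
    thus "norm (s k *\<^sub>R x k) \<le> \<bar>s k\<bar>" by simp
  qed
  finally show ?thesis .
qed

lemma prj_as_comb:
  "prj y n z = (\<Sum>k<n. (2 * inner z (y k - cen y n)) *\<^sub>R (y k - cen y n))"
  by (simp add: prj_def scaleR_sum_right)

lemma sum_others_bound:
  fixes s :: "nat \<Rightarrow> real"
  assumes "(\<Sum>j<n. s j) = 0" "k < n" "\<forall>j<n. s j \<ge> - b"
  shows "s k \<le> real (n - 1) * b"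
proof -
  have "(\<Sum>j<n. s j) = s k + (\<Sum>j\<in>{..<n} - {k}. s j)"
    using assms(2) by (simp add: sum.remove)
  moreover have "(\<Sum>j\<in>{..<n} - {k}. s j) \<ge> (\<Sum>j\<in>{..<n} - {k}. - b)"
    using assms(3) by (intro sum_mono) auto
  moreover have "(\<Sum>j\<in>{..<n} - {k}. - b) = - (real (n - 1) * b)"
    using assms(2) by simp
  ultimately show ?thesis using assms(1) by linarith
qed

lemma centre_close:
  fixes y :: "nat \<Rightarrow> 'a::euclidean_space"
  assumes reg: "regk y (Suc DIM('a))"
    and yc: "\<forall>k<Suc DIM('a). dist (y k) c \<le> Jung DIM('a) + \<eta>"
    and e0: "0 \<le> \<eta>" and e1: "\<eta> \<le> 1"
  shows "norm (c - cen y (Suc DIM('a))) \<le> 3 * (1 + real DIM('a))^2 * \<eta>"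
proof -
  define n where "n = Suc DIM('a)"
  define m where "m = real n"
  define g where "g = cen y n"
  define x where "x k = y k - g" for k
  define J where "J = Jung DIM('a)"
  define e where "e = c - g"
  have n1: "n \<ge> 1" by (simp add: n_def)
  have J2: "J^2 = (m - 1) / (2 * m)" by (simp add: J_def Jung_sq m_def n_def)
  have xx: "inner (x k) (x k) = J^2" if "k < n" for k
    using reg_sq_x[OF reg[folded n_def] n1 that] J2 by (simp add: x_def g_def m_def)
  have J1: "J \<le> 1"
  proof -
    have "J^2 \<le> 1^2" unfolding J2 power_one m_def using frac_half[of n] by linarith
    thus ?thesis by (rule power2_le_imp_le) simp
  qed
  have J0: "0 \<le> J" by (simp add: J_def Jung_nonneg)
  define s where "s k = 2 * inner e (x k)" for k
  have ss: "(\<Sum>k<n. s k) = 0"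
    using sum_inner_x_zero[OF n1, of e y] by (simp add: s_def x_def g_def sum_distrib_left[symmetric])
  have slow: "s k \<ge> - (3 * \<eta>)" if k: "k < n" for k
  proof -
    have "c - y k = e - x k" by (simp add: e_def x_def)
    hence "(dist (y k) c)^2 = inner (e - x k) (e - x k)"
      by (simp add: dist_norm power2_norm_eq_inner norm_minus_commute)
    also have "\<dots> = inner e e - s k + J^2"
      using xx[OF k] by (simp add: s_def inner_diff_left inner_diff_right inner_commute)
    finally have A: "(dist (y k) c)^2 = inner e e - s k + J^2" .
    have "(dist (y k) c)^2 \<le> (J + \<eta>)^2" using yc k by (intro power_mono) (auto simp: n_def J_def)
    also have "(J + \<eta>)^2 = J^2 + 2 * J * \<eta> + \<eta> * \<eta>" by (simp add: power2_eq_square algebra_simps)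
    also have "\<dots> \<le> J^2 + 2 * 1 * \<eta> + 1 * \<eta>"
      using J1 e0 e1 J0 by (intro add_mono mult_right_mono mult_left_mono) auto
    finally have "inner e e - s k + J^2 \<le> J^2 + 3 * \<eta>" using A by simp
    thus ?thesis using inner_ge_zero[of e] by linarith
  qed
  have sabs: "\<bar>s k\<bar> \<le> 3 * m * \<eta>" if k: "k < n" for k
  proof -
    have "s k \<le> real (n - 1) * (3 * \<eta>)" using sum_others_bound[OF ss k] slow by auto
    also have "\<dots> \<le> m * (3 * \<eta>)" using e0 by (intro mult_right_mono) (auto simp: m_def)
    finally have up: "s k \<le> 3 * m * \<eta>" by simp
    have "- (3 * \<eta>) \<ge> - (3 * m * \<eta>)" using e0 n1 by (simp add: m_def mult_le_cancel_right1)
    thus ?thesis using up slow[OF k] by (simp add: abs_le_iff)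
  qed
  have "e = prj y n e" using full_prj[OF reg] by (simp add: n_def)
  also have "\<dots> = (\<Sum>k<n. s k *\<^sub>R x k)" by (simp add: prj_as_comb s_def x_def g_def)
  finally have eq: "e = (\<Sum>k<n. s k *\<^sub>R x k)" .
  have "norm e \<le> (\<Sum>k<n. \<bar>s k\<bar>)"
    unfolding eq using reg_norm_x[OF reg[folded n_def] n1] by (intro norm_comb) (simp add: x_def g_def)
  also have "\<dots> \<le> (\<Sum>k<n. 3 * m * \<eta>)" using sabs by (intro sum_mono) auto
  also have "\<dots> = 3 * m^2 * \<eta>" by (simp add: m_def power2_eq_square)
  finally show ?thesis by (simp add: e_def g_def m_def n_def)
qed

lemma radius_lower:
  fixes W :: "'a::euclidean_space set"
  assumes fin: "finite W" and card: "card W = n" and n1: "n \<ge> 1"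
    and ww: "\<forall>w\<in>W. \<forall>w'\<in>W. w \<noteq> w' \<longrightarrow> 1 - \<eta> \<le> (dist w w')^2"
    and up: "\<forall>w\<in>W. (dist w g)^2 \<le> Jsq + b"
    and w0: "w0 \<in> W"
  shows "(dist w0 g)^2 \<ge> real (n - 1) * ((1 - \<eta>) / 2 - Jsq - b)"
proof -
  define u where "u w = w - g" for w
  define N where "N w = inner (u w) (u w)" for w
  have Nd: "N w = (dist w g)^2" for w by (simp add: N_def u_def dist_norm power2_norm_eq_inner)
  have ex: "(dist w w')^2 = N w + N w' - 2 * inner (u w) (u w')" for w w'
  proof -
    have "w - w' = u w - u w'" by (simp add: u_def)
    hence "(dist w w')^2 = inner (u w - u w') (u w - u w')" by (simp add: dist_norm power2_norm_eq_inner)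
    thus ?thesis by (simp add: N_def inner_diff_left inner_diff_right inner_commute)
  qed
  have "(\<Sum>w\<in>W. \<Sum>w'\<in>W. (dist w w')^2) = (\<Sum>w\<in>W. \<Sum>w'\<in>W. N w + N w' - 2 * inner (u w) (u w'))"
    by (simp add: ex)
  also have "\<dots> = (\<Sum>w\<in>W. \<Sum>w'\<in>W. N w) + (\<Sum>w\<in>W. \<Sum>w'\<in>W. N w') - 2 * (\<Sum>w\<in>W. \<Sum>w'\<in>W. inner (u w) (u w'))"
    by (simp add: sum_subtractf sum.distrib sum_distrib_left)
  also have "(\<Sum>w\<in>W. \<Sum>w'\<in>W. inner (u w) (u w')) = inner (\<Sum>w\<in>W. u w) (\<Sum>w'\<in>W. u w')"
    unfolding inner_sum_left inner_sum_right by (rule sum.swap)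
  also have "(\<Sum>w\<in>W. \<Sum>w'\<in>W. N w) = real n * (\<Sum>w\<in>W. N w)" using card by (simp add: sum_distrib_left mult.commute)
  also have "(\<Sum>w\<in>W. \<Sum>w'\<in>W. N w') = real n * (\<Sum>w\<in>W. N w)" using card by simp
  finally have A: "(\<Sum>w\<in>W. \<Sum>w'\<in>W. (dist w w')^2) \<le> 2 * real n * (\<Sum>w\<in>W. N w)"
    using inner_ge_zero[of "\<Sum>w\<in>W. u w"] by simp
  have "(\<Sum>w\<in>W. \<Sum>w'\<in>W. (if w = w' then 0 else 1 - \<eta>)) \<le> (\<Sum>w\<in>W. \<Sum>w'\<in>W. (dist w w')^2)"
    using ww by (intro sum_mono) auto
  moreover have "(\<Sum>w\<in>W. \<Sum>w'\<in>W. (if w = w' then 0 else 1 - \<eta>)) = real n * (real (n - 1) * (1 - \<eta>))"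
  proof -
    have "(\<Sum>w'\<in>W. (if w = w' then 0 else 1 - \<eta>)) = real (n - 1) * (1 - \<eta>)" if "w \<in> W" for w
    proof -
      have "(\<Sum>w'\<in>W. (if w = w' then 0 else 1 - \<eta>)) = (\<Sum>w'\<in>W - {w}. 1 - \<eta>)"
        using fin that by (simp add: sum.If_cases Diff_eq Int_def)
      also have "\<dots> = real (n - 1) * (1 - \<eta>)" using fin that card by simp
      finally show ?thesis .
    qed
    hence "(\<Sum>w\<in>W. \<Sum>w'\<in>W. (if w = w' then 0 else 1 - \<eta>)) = (\<Sum>w\<in>W. real (n - 1) * (1 - \<eta>))"
      by (intro sum.cong) auto
    thus ?thesis using card by simp
  qed
  ultimately have B: "real n * (real (n - 1) * (1 - \<eta>)) \<le> 2 * real n * (\<Sum>w\<in>W. N w)" using A by linarith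
  have SN: "real (n - 1) * (1 - \<eta>) / 2 \<le> (\<Sum>w\<in>W. N w)"
  proof -
    have "real n * (real (n - 1) * (1 - \<eta>)) \<le> real n * (2 * (\<Sum>w\<in>W. N w))" using B by (simp add: algebra_simps)
    hence "real (n - 1) * (1 - \<eta>) \<le> 2 * (\<Sum>w\<in>W. N w)" using n1 by simp
    thus ?thesis by simp
  qed
  have "(\<Sum>w\<in>W. N w) = N w0 + (\<Sum>w\<in>W - {w0}. N w)" using fin w0 by (simp add: sum.remove)
  moreover have "(\<Sum>w\<in>W - {w0}. N w) \<le> (\<Sum>w\<in>W - {w0}. Jsq + b)"
    using up by (intro sum_mono) (auto simp: Nd)
  moreover have "(\<Sum>w\<in>W - {w0}. Jsq + b) = real (n - 1) * (Jsq + b)" using fin w0 card by simp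
  ultimately have "N w0 \<ge> real (n - 1) * (1 - \<eta>) / 2 - real (n - 1) * (Jsq + b)" using SN by linarith
  moreover have "real (n - 1) * (1 - \<eta>) / 2 - real (n - 1) * (Jsq + b) = real (n - 1) * ((1 - \<eta>) / 2 - Jsq - b)"
    by (simp add: algebra_simps)
  ultimately show ?thesis by (simp add: Nd)
qed

lemma sum_others_bound2:
  fixes a :: "nat \<Rightarrow> real"
  assumes "(\<Sum>j<n. a j) = A" "k < n" "\<forall>j<n. a j \<ge> - b"
  shows "a k \<le> A + real (n - 1) * b"
proof -
  have "(\<Sum>j<n. a j) = a k + (\<Sum>j\<in>{..<n} - {k}. a j)"
    using assms(2) by (simp add: sum.remove)
  moreover have "(\<Sum>j\<in>{..<n} - {k}. a j) \<ge> (\<Sum>j\<in>{..<n} - {k}. - b)"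
    using assms(3) by (intro sum_mono) auto
  moreover have "(\<Sum>j\<in>{..<n} - {k}. - b) = - (real (n - 1) * b)"
    using assms(2) by simp
  ultimately show ?thesis using assms(1) by linarith
qed

lemma abs_via_neg: "\<bar>v::real\<bar> = v + 2 * max (- v) 0"
  by (simp add: abs_if max_def)

lemma bary_close:
  fixes y :: "nat \<Rightarrow> 'a::euclidean_space"
  assumes reg: "regk y (Suc DIM('a))"
    and zlow: "inner z z \<ge> (real (Suc DIM('a)) - 1) / (2 * real (Suc DIM('a))) - \<alpha> * \<eta>"
    and zk: "\<forall>k<Suc DIM('a). inner (z - (y k - cen y (Suc DIM('a)))) (z - (y k - cen y (Suc DIM('a)))) \<le> 1 + 3 * \<eta>"
    and a0: "0 \<le> \<alpha>" and e0: "0 \<le> \<eta>"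
    and small: "real (Suc DIM('a)) * ((\<alpha> + 3) * \<eta>) \<le> 1"
  shows "\<exists>K<Suc DIM('a). norm (z - (y K - cen y (Suc DIM('a))))
            \<le> (6 * real (Suc DIM('a)) * (\<alpha> + 3) + 4 * \<alpha>) * \<eta>"
proof -
  define n where "n = Suc DIM('a)"
  define m where "m = real n"
  define g where "g = cen y n"
  define x where "x k = y k - g" for k
  define Jsq where "Jsq = (m - 1) / (2 * m)"
  define \<epsilon> where "\<epsilon> = (\<alpha> + 3) * \<eta>"
  define \<delta> where "\<delta> = 2 * \<alpha> * \<eta> + 2 * m * \<epsilon>"
  have n1: "n \<ge> 1" by (simp add: n_def)
  have m1: "m \<ge> 1" by (simp add: m_def n_def)
  have eps0: "\<epsilon> \<ge> 0" using a0 e0 by (simp add: \<epsilon>_def)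
  have del0: "\<delta> \<ge> 0" using a0 e0 eps0 m1 by (simp add: \<delta>_def)
  have meps: "m * \<epsilon> \<le> 1" using small by (simp add: m_def n_def \<epsilon>_def)
  have twoJ: "2 * Jsq = 1 - 1 / m" using m1 by (simp add: Jsq_def field_simps)
  have xx: "inner (x k) (x k) = Jsq" if "k < n" for k
    using reg_sq_x[OF reg[folded n_def] n1 that] by (simp add: x_def g_def Jsq_def m_def)
  have nx: "\<forall>k<n. norm (x k) \<le> 1" using reg_norm_x[OF reg[folded n_def] n1] by (simp add: x_def g_def)
  define s where "s k = 2 * inner z (x k)" for k
  define a where "a k = 1 / m + s k" for k
  have ss: "(\<Sum>k<n. s k) = 0"
    using sum_inner_x_zero[OF n1, of z y] by (simp add: s_def x_def g_def sum_distrib_left[symmetric])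
  have sa: "(\<Sum>k<n. a k) = 1" using ss m1 by (simp add: a_def sum.distrib m_def)
  have alow: "a k \<ge> - \<epsilon>" if k: "k < n" for k
  proof -
    have "inner (z - x k) (z - x k) = inner z z + Jsq - s k"
      using xx[OF k] by (simp add: s_def inner_diff_left inner_diff_right inner_commute)
    moreover have "inner (z - x k) (z - x k) \<le> 1 + 3 * \<eta>" using zk k by (simp add: x_def g_def n_def)
    moreover have "inner z z \<ge> Jsq - \<alpha> * \<eta>" using zlow by (simp add: Jsq_def m_def n_def)
    ultimately have "s k \<ge> 2 * Jsq - 1 - (\<alpha> + 3) * \<eta>" by (simp add: algebra_simps)
    thus ?thesis using twoJ by (simp add: a_def \<epsilon>_def)
  qed
  have zz: "inner z z = (\<Sum>k<n. (s k)^2) / 2"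
  proof -
    have "prj y n z = z" using full_prj[OF reg] by (simp add: n_def)
    hence "inner z z = 2 * (\<Sum>k<n. (inner z (x k))^2)"
      using prj_sq(2)[OF reg[folded n_def] n1, of z] by (simp add: x_def g_def)
    also have "\<dots> = (\<Sum>k<n. (s k)^2) / 2"
      by (simp add: s_def power_mult_distrib sum_distrib_left[symmetric] sum_divide_distrib[symmetric])
    finally show ?thesis .
  qed
  have sa2: "(\<Sum>k<n. (a k)^2) = 1 / m + (\<Sum>k<n. (s k)^2)"
  proof -
    have "(\<Sum>k<n. (a k)^2) = (\<Sum>k<n. 1 / m^2 + (2 / m) * s k + (s k)^2)"
      by (intro sum.cong refl) (simp add: a_def power2_eq_square algebra_simps)
    also have "\<dots> = real n / m^2 + (2 / m) * (\<Sum>k<n. s k) + (\<Sum>k<n. (s k)^2)"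
      by (simp add: sum.distrib sum_distrib_left)
    also have "real n / m^2 = 1 / m" by (simp add: m_def power2_eq_square)
    finally show ?thesis using ss by simp
  qed
  have sa2low: "(\<Sum>k<n. (a k)^2) \<ge> 1 - 2 * \<alpha> * \<eta>"
  proof -
    have "(\<Sum>k<n. (s k)^2) = 2 * inner z z" using zz by simp
    moreover have "inner z z \<ge> Jsq - \<alpha> * \<eta>" using zlow by (simp add: Jsq_def m_def n_def)
    ultimately show ?thesis using sa2 twoJ by linarith
  qed
  define M where "M = Max (a ` {..<n})"
  have "0 \<in> {..<n}" using n1 by simp
  hence Min: "M \<in> a ` {..<n}" unfolding M_def by (intro Max_in) auto
  then obtain K where K: "K < n" "a K = M" by auto
  have Mge: "a k \<le> M" if "k < n" for k unfolding M_def using that by (intro Max_ge) auto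
  have each: "(a k)^2 \<le> (M - \<epsilon>) * a k + \<epsilon> * M" if k: "k < n" for k
  proof -
    have "0 \<le> (a k + \<epsilon>) * (M - a k)" using alow[OF k] Mge[OF k] by (intro mult_nonneg_nonneg) auto
    thus ?thesis by (simp add: power2_eq_square algebra_simps)
  qed
  have "(\<Sum>k<n. (a k)^2) \<le> (\<Sum>k<n. (M - \<epsilon>) * a k + \<epsilon> * M)" using each by (intro sum_mono) auto
  also have "\<dots> = (M - \<epsilon>) * (\<Sum>k<n. a k) + m * (\<epsilon> * M)" by (simp add: sum.distrib sum_distrib_left m_def)
  also have "\<dots> = (M - \<epsilon>) + m * \<epsilon> * M" using sa by simp
  finally have S1: "1 - 2 * \<alpha> * \<eta> \<le> (M - \<epsilon>) + m * \<epsilon> * M" using sa2low by linarith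
  have Mup: "M \<le> 1 + m * \<epsilon>"
  proof -
    have "M \<le> 1 + real (n - 1) * \<epsilon>" using sum_others_bound2[OF sa K(1)] alow K(2) by auto
    also have "real (n - 1) * \<epsilon> \<le> m * \<epsilon>" using eps0 by (intro mult_right_mono) (auto simp: m_def)
    finally show ?thesis by simp
  qed
  have "m * \<epsilon> * M \<le> m * \<epsilon> * (1 + m * \<epsilon>)" using Mup eps0 m1 by (intro mult_left_mono) auto
  also have "\<dots> = m * \<epsilon> + (m * \<epsilon>) * (m * \<epsilon>)" by (simp add: algebra_simps)
  also have "(m * \<epsilon>) * (m * \<epsilon>) \<le> 1 * (m * \<epsilon>)" using meps eps0 m1 by (intro mult_right_mono) auto
  finally have "m * \<epsilon> * M \<le> 2 * (m * \<epsilon>)" by (simp add: mult.commute)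
  hence Mlow: "M \<ge> 1 - \<delta>" using S1 eps0 by (simp add: \<delta>_def algebra_simps)
  define v where "v k = a k - (if k = K then 1 else 0)" for k
  have sv: "(\<Sum>k<n. v k) = 0" using sa K(1) by (simp add: v_def sum_subtractf)
  have negb: "max (- v k) 0 \<le> (if k = K then \<delta> else \<epsilon>)" if k: "k < n" for k
  proof (cases "k = K")
    case True thus ?thesis using Mlow K(2) del0 by (simp add: v_def)
  next
    case False thus ?thesis using alow[OF k] eps0 by (simp add: v_def)
  qed
  have "(\<Sum>k<n. \<bar>v k\<bar>) = (\<Sum>k<n. v k) + 2 * (\<Sum>k<n. max (- v k) 0)"
    by (simp add: abs_via_neg[of "v _"] sum.distrib sum_distrib_left)
  also have "(\<Sum>k<n. max (- v k) 0) \<le> (\<Sum>k<n. (if k = K then \<delta> else \<epsilon>))"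
    using negb by (intro sum_mono) auto
  also have "(\<Sum>k<n. (if k = K then \<delta> else \<epsilon>)) = \<delta> + (\<Sum>k\<in>{..<n} - {K}. \<epsilon>)"
    using K(1) by (simp add: sum.remove)
  also have "(\<Sum>k\<in>{..<n} - {K}. \<epsilon>) = real (n - 1) * \<epsilon>" using K(1) by simp
  also have "real (n - 1) * \<epsilon> \<le> m * \<epsilon>" using eps0 by (intro mult_right_mono) (auto simp: m_def)
  finally have Sv: "(\<Sum>k<n. \<bar>v k\<bar>) \<le> 2 * (\<delta> + m * \<epsilon>)" using sv by simp
  have comb: "(\<Sum>k<n. v k *\<^sub>R x k) = z - x K"
  proof -
    have "(\<Sum>k<n. v k *\<^sub>R x k) = (\<Sum>k<n. (1 / m) *\<^sub>R x k) + (\<Sum>k<n. s k *\<^sub>R x k) - (\<Sum>k<n. (if k = K then x k else 0))"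
    proof -
      have "v k *\<^sub>R x k = ((1 / m) *\<^sub>R x k + s k *\<^sub>R x k) - (if k = K then x k else 0)" for k
        by (cases "k = K") (auto simp: v_def a_def scaleR_add_left scaleR_diff_left)
      hence "(\<Sum>k<n. v k *\<^sub>R x k) = (\<Sum>k<n. ((1 / m) *\<^sub>R x k + s k *\<^sub>R x k) - (if k = K then x k else 0))"
        by simp
      also have "\<dots> = (\<Sum>k<n. (1 / m) *\<^sub>R x k) + (\<Sum>k<n. s k *\<^sub>R x k) - (\<Sum>k<n. (if k = K then x k else 0))"
        by (simp only: sum_subtractf sum.distrib)
      finally show ?thesis .
    qed
    also have "(\<Sum>k<n. (1 / m) *\<^sub>R x k) = 0"
      using sum_x_zero[OF n1, of y] by (simp add: x_def g_def flip: scaleR_sum_right)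
    also have "(\<Sum>k<n. s k *\<^sub>R x k) = prj y n z" by (simp add: prj_as_comb s_def x_def g_def)
    also have "prj y n z = z" using full_prj[OF reg] by (simp add: n_def)
    also have "(\<Sum>k<n. (if k = K then x k else 0)) = x K" using K(1) by simp
    finally show ?thesis by simp
  qed
  have "norm (z - x K) \<le> (\<Sum>k<n. \<bar>v k\<bar>)" unfolding comb[symmetric] by (rule norm_comb[OF nx])
  also have "\<dots> \<le> 2 * (\<delta> + m * \<epsilon>)" by (rule Sv)
  also have "\<dots> = (6 * m * (\<alpha> + 3) + 4 * \<alpha>) * \<eta>" by (simp add: \<delta>_def \<epsilon>_def algebra_simps)
  finally show ?thesis using K(1) by (auto simp: x_def g_def n_def m_def)
qed



definition alphaC :: "nat \<Rightarrow> real" where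
  "alphaC d = real d * (1/2 + 3 * (1 + 3 * (real d + 1)^2))"
definition eta0 :: "nat \<Rightarrow> real" where
  "eta0 d = 1 / ((real d + 1) * (alphaC d + 3))"
definition Cfin :: "nat \<Rightarrow> real" where
  "Cfin d = 6 * (real d + 1) * (alphaC d + 3) + 4 * alphaC d"

lemma alphaC_ge: "alphaC d \<ge> 0" by (simp add: alphaC_def)

lemma eta0_pos: "eta0 d > 0" using alphaC_ge[of d] by (simp add: eta0_def add_pos_nonneg)

lemma Cfin_pos: "Cfin d > 0" using alphaC_ge[of d] by (simp add: Cfin_def add_pos_nonneg)

lemma sq_bound_lin:
  fixes J t :: real
  assumes "0 \<le> J" "J \<le> 1" "0 \<le> t" "t \<le> 1"
  shows "(J + t)^2 \<le> J^2 + 3 * t"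
proof -
  have "(J + t)^2 = J^2 + 2 * J * t + t * t" by (simp add: power2_eq_square algebra_simps)
  also have "\<dots> \<le> J^2 + 2 * 1 * t + 1 * t"
    using assms by (intro add_mono mult_right_mono mult_left_mono) auto
  finally show ?thesis by simp
qed

lemma final_close:
  fixes y :: "nat \<Rightarrow> 'a::euclidean_space" and W :: "'a set"
  assumes reg: "regk y (Suc DIM('a))"
    and yc: "\<forall>k<Suc DIM('a). dist (y k) c \<le> Jung DIM('a) + \<eta>"
    and fin: "finite W" and card: "card W = Suc DIM('a)"
    and wc: "\<forall>w\<in>W. dist w c \<le> Jung DIM('a) + \<eta>"
    and wy: "\<forall>w\<in>W. \<forall>k<Suc DIM('a). dist w (y k) \<le> 1 + \<eta>"
    and ww: "\<forall>w\<in>W. \<forall>w'\<in>W. w \<noteq> w' \<longrightarrow> 1 - \<eta> \<le> (dist w w')^2"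
    and e0: "0 \<le> \<eta>" and small: "\<eta> \<le> eta0 DIM('a)"
  shows "\<forall>w\<in>W. \<exists>k<Suc DIM('a). dist w (y k) \<le> Cfin DIM('a) * \<eta>"
proof
  fix w assume w: "w \<in> W"
  define d where "d = real DIM('a)"
  define m where "m = d + 1"
  define a1 where "a1 = 1 + 3 * m^2"
  define \<alpha> where "\<alpha> = alphaC DIM('a)"
  define J where "J = Jung DIM('a)"
  define g where "g = cen y (Suc DIM('a))"
  have d1: "d \<ge> 1" using DIM_positive[where 'a='a] by (simp add: d_def)
  have al: "\<alpha> = d * (1/2 + 3 * a1)" by (simp add: \<alpha>_def alphaC_def d_def a1_def m_def)
  have al0: "\<alpha> \<ge> 0" by (simp add: \<alpha>_def alphaC_ge)
  have a1pos: "a1 \<ge> 1" by (simp add: a1_def)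
  have a1al: "a1 \<le> \<alpha> + 3"
  proof -
    have "a1 \<le> 3 * a1" using a1pos by simp
    also have "\<dots> \<le> d * (3 * a1)" using d1 a1pos by simp
    also have "\<dots> \<le> \<alpha>" unfolding al using d1 a1pos by (simp add: algebra_simps)
    finally show ?thesis by simp
  qed
  have sm: "m * (\<alpha> + 3) * \<eta> \<le> 1"
  proof -
    have p: "m * (\<alpha> + 3) > 0" using d1 al0 by (simp add: m_def add_pos_nonneg)
    have "\<eta> \<le> 1 / (m * (\<alpha> + 3))" using small by (simp add: eta0_def m_def d_def \<alpha>_def)
    thus ?thesis using p by (simp add: pos_le_divide_eq mult.commute)
  qed
  have m2: "m \<ge> 2" using d1 by (simp add: m_def)
  have mp: "1 \<le> m * (\<alpha> + 3)"
  proof -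
    have "1 * 1 \<le> m * (\<alpha> + 3)" using m2 al0 by (intro mult_mono) auto
    thus ?thesis by simp
  qed
  have e1: "\<eta> \<le> 1"
  proof -
    have "1 * \<eta> \<le> (m * (\<alpha> + 3)) * \<eta>" using mp e0 by (intro mult_right_mono) auto
    thus ?thesis using sm by simp
  qed
  have a1e: "a1 * \<eta> \<le> 1"
  proof -
    have "a1 * \<eta> \<le> (m * (\<alpha> + 3)) * \<eta>"
    proof (rule mult_right_mono)
      have "1 * (\<alpha> + 3) \<le> m * (\<alpha> + 3)" using m2 al0 by (intro mult_right_mono) auto
      thus "a1 \<le> m * (\<alpha> + 3)" using a1al by simp
    qed (use e0 in simp)
    thus ?thesis using sm by simp
  qed
  have J0: "0 \<le> J" by (simp add: J_def Jung_nonneg)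
  have Jsq: "J^2 = d / (2 * m)" by (simp add: J_def Jung_sq d_def m_def)
  have J1: "J \<le> 1"
  proof -
    have "d / (2 * m) \<le> 1" using d1 by (simp add: m_def field_simps)
    hence "J^2 \<le> 1^2" using Jsq by simp
    thus ?thesis by (rule power2_le_imp_le) simp
  qed
  have cg: "norm (c - g) \<le> 3 * m^2 * \<eta>"
    using centre_close[OF reg _ e0 e1, of c] yc by (simp add: g_def m_def d_def J_def add.commute)
  have wg: "dist w' g \<le> J + a1 * \<eta>" if w': "w' \<in> W" for w'
  proof -
    have "dist w' g \<le> dist w' c + dist c g" by (rule dist_triangle)
    also have "dist c g = norm (c - g)" by (simp add: dist_norm)
    finally have "dist w' g \<le> dist w' c + norm (c - g)" .
    moreover have "dist w' c \<le> J + \<eta>" using wc w' by (simp add: J_def)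
    moreover have "J + a1 * \<eta> = J + \<eta> + 3 * m^2 * \<eta>" by (simp add: a1_def algebra_simps)
    ultimately show ?thesis using cg by linarith
  qed
  have wg2: "(dist w' g)^2 \<le> J^2 + 3 * a1 * \<eta>" if w': "w' \<in> W" for w'
  proof -
    have "(dist w' g)^2 \<le> (J + a1 * \<eta>)^2" using wg[OF w'] by (intro power_mono) auto
    also have "\<dots> \<le> J^2 + 3 * (a1 * \<eta>)" using J0 J1 e0 a1e a1pos by (intro sq_bound_lin) auto
    finally show ?thesis by simp
  qed
  have rl: "(dist w g)^2 \<ge> real (Suc DIM('a) - 1) * ((1 - \<eta>) / 2 - J^2 - 3 * a1 * \<eta>)"
    by (rule radius_lower[OF fin card _ ww _ w]) (use wg2 in auto)
  have zlow: "inner (w - g) (w - g) \<ge> (real (Suc DIM('a)) - 1) / (2 * real (Suc DIM('a))) - \<alpha> * \<eta>"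
  proof -
    have "inner (w - g) (w - g) = (dist w g)^2" by (simp add: dist_norm power2_norm_eq_inner)
    moreover have "real (Suc DIM('a) - 1) * ((1 - \<eta>) / 2 - J^2 - 3 * a1 * \<eta>)
        = (real (Suc DIM('a)) - 1) / (2 * real (Suc DIM('a))) - \<alpha> * \<eta>"
      unfolding Jsq al using d1 by (simp add: d_def m_def field_simps)
    ultimately show ?thesis using rl by simp
  qed
  have zk: "\<forall>k<Suc DIM('a). inner (w - g - (y k - cen y (Suc DIM('a)))) (w - g - (y k - cen y (Suc DIM('a)))) \<le> 1 + 3 * \<eta>"
  proof (intro allI impI)
    fix k assume k: "k < Suc DIM('a)"
    have "w - g - (y k - cen y (Suc DIM('a))) = w - y k" by (simp add: g_def)
    hence "inner (w - g - (y k - cen y (Suc DIM('a)))) (w - g - (y k - cen y (Suc DIM('a)))) = (dist w (y k))^2"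
      by (simp add: dist_norm power2_norm_eq_inner)
    also have "\<dots> \<le> (1 + \<eta>)^2" using wy w k by (intro power_mono) auto
    also have "\<dots> \<le> 1^2 + 3 * \<eta>" using e0 e1 by (intro sq_bound_lin) auto
    finally show "inner (w - g - (y k - cen y (Suc DIM('a)))) (w - g - (y k - cen y (Suc DIM('a)))) \<le> 1 + 3 * \<eta>" by simp
  qed
  have sm': "real (Suc DIM('a)) * ((\<alpha> + 3) * \<eta>) \<le> 1" using sm by (simp add: m_def d_def algebra_simps)
  from bary_close[OF reg zlow zk al0 e0 sm']
  obtain K where K: "K < Suc DIM('a)"
    "norm (w - g - (y K - cen y (Suc DIM('a)))) \<le> (6 * real (Suc DIM('a)) * (\<alpha> + 3) + 4 * \<alpha>) * \<eta>" by blast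
  have "norm (w - g - (y K - cen y (Suc DIM('a)))) = dist w (y K)" by (simp add: g_def dist_norm)
  moreover have "6 * real (Suc DIM('a)) * (\<alpha> + 3) + 4 * \<alpha> = Cfin DIM('a)"
    by (simp add: Cfin_def \<alpha>_def add.commute)
  ultimately show "\<exists>k<Suc DIM('a). dist w (y k) \<le> Cfin DIM('a) * \<eta>" using K by auto
qed



lemma hausdorff_le:
  fixes A B :: "'a::metric_space set"
  assumes "A \<noteq> {}" "B \<noteq> {}"
    and ab: "\<forall>a\<in>A. \<exists>b\<in>B. dist a b \<le> r" and ba: "\<forall>b\<in>B. \<exists>a\<in>A. dist a b \<le> r"
  shows "hausdorff_dist A B \<le> r"
proof -
  have 1: "(SUP a\<in>A. INF b\<in>B. dist a b) \<le> r"
  proof (rule cSUP_least[OF assms(1)])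
    fix a assume a: "a \<in> A"
    then obtain b where b: "b \<in> B" "dist a b \<le> r" using ab by auto
    have "bdd_below ((dist a) ` B)" by (rule bdd_belowI2[where m=0]) simp
    thus "(INF b\<in>B. dist a b) \<le> r" using b by (rule cINF_lower2)
  qed
  have 2: "(SUP b\<in>B. INF a\<in>A. dist a b) \<le> r"
  proof (rule cSUP_least[OF assms(2)])
    fix b assume b: "b \<in> B"
    then obtain a where a: "a \<in> A" "dist a b \<le> r" using ba by auto
    have "bdd_below ((\<lambda>a. dist a b) ` A)" by (rule bdd_belowI2[where m=0]) simp
    thus "(INF a\<in>A. dist a b) \<le> r" using a by (rule cINF_lower2)
  qed
  show ?thesis using 1 2 by (simp add: hausdorff_dist_def)
qed

lemma Jung_le1: "Jung d \<le> 1"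
proof -
  have "real d / (2 * (real d + 1)) \<le> 1" by (simp add: field_simps)
  hence "(Jung d)^2 \<le> 1^2" by (simp add: Jung_sq)
  thus ?thesis by (rule power2_le_imp_le) simp
qed

lemma witness_near:
  fixes S W :: "'a::euclidean_space set"
  assumes S: "compact S" and diam: "diameter S \<le> 1 + \<beta>" and b0: "0 \<le> \<beta>"
    and b1: "\<beta> \<le> 1 / (12 * (real DIM('a) + 1)^2)"
    and WS: "W \<subseteq> S" and card: "card W = DIM('a) + 1" and cr: "Jung DIM('a) \<le> cheb_rad W"
  shows "\<forall>w\<in>W. \<forall>w'\<in>W. w \<noteq> w' \<longrightarrow> 1 - 12 * (real DIM('a) + 1)^2 * \<beta> \<le> (dist w w')^2"
proof -
  have fin: "finite W" using card by (metis card.infinite nat.distinct(1) Suc_eq_plus1)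
  have ne: "W \<noteq> {}" using card by auto
  obtain c R T l where k: "cheb_rad W \<le> R" "\<forall>x\<in>W. dist x c \<le> R" "finite T" "T \<subseteq> W"
    "card T \<le> DIM('a) + 1" "\<forall>t\<in>T. dist t c = R" "\<forall>t\<in>T. 0 \<le> l t" "sum l T = 1"
    "(\<Sum>t\<in>T. l t *\<^sub>R t) = c"
    using kkt[OF finite_imp_compact[OF fin] ne] by blast
  have bS: "bounded S" using S by (rule compact_imp_bounded)
  have dT: "\<forall>t\<in>T. \<forall>t'\<in>T. dist t t' \<le> 1 + \<beta>"
    using k(4) WS diameter_bounded_bound[OF bS] diam by (meson order_trans subsetD)
  have RJ: "Jung DIM('a) \<le> R" using cr k(1) by simp
  note wn = weights_near[OF k(3) k(5) k(7) k(8) k(9) k(6) RJ dT b0 b1]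
  have "T = W" using card_subset_eq[OF fin k(4)] wn(1) card by simp
  thus ?thesis using wn(3) by simp
qed



lemma reg_simplex:
  fixes y :: "nat \<Rightarrow> 'a::euclidean_space"
  assumes reg: "regk y (Suc DIM('a))"
  shows "regular_unit_simplex (y ` {..<Suc DIM('a)})"
proof -
  have inj: "inj_on y {..<Suc DIM('a)}"
  proof (rule inj_onI)
    fix i j assume "i \<in> {..<Suc DIM('a)}" "j \<in> {..<Suc DIM('a)}" "y i = y j"
    thus "i = j" using reg by (auto simp: regk_def) (metis dist_self zero_neq_one)
  qed
  have "card (y ` {..<Suc DIM('a)}) = DIM('a) + 1" using card_image[OF inj] by simp
  moreover have "\<forall>a\<in>y ` {..<Suc DIM('a)}. \<forall>b\<in>y ` {..<Suc DIM('a)}. a \<noteq> b \<longrightarrow> dist a b = 1"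
    using reg by (auto simp: regk_def)
  ultimately show ?thesis by (simp add: regular_unit_simplex_def)
qed

lemma le_div_mult:
  fixes \<beta> a b :: real
  assumes "b > 0" "\<beta> \<le> a / b"
  shows "b * \<beta> \<le> a"
  using assms by (simp add: pos_le_divide_eq mult.commute)

theorem mainTheorem4:
  shows "\<exists>\<beta>d > 0. \<exists>Cd > 0. \<forall>(S :: 'a::euclidean_space set) \<beta>.
           compact S \<and> 0 \<le> \<beta> \<and> \<beta> \<le> \<beta>d \<and> diameter S \<le> 1 + \<beta> \<and> cheb_rad S \<ge> Jung DIM('a)
           \<longrightarrow> (\<exists>\<Delta>. regular_unit_simplex \<Delta> \<and>
                  (\<forall>W. witness S W \<longrightarrow> hausdorff_dist W \<Delta> \<le> Cd * \<beta>))"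
proof -
  define n where "n = Suc DIM('a)"
  define m where "m = real DIM('a) + 1"
  define K where "K = 12 * m^2"
  obtain \<delta>R CR where dR: "\<delta>R > 0" and CR: "CR > 0" and
    AR: "\<forall>(v::nat \<Rightarrow> 'a) \<epsilon>. 0 \<le> \<epsilon> \<and> \<epsilon> \<le> \<delta>R \<and> nearreg v n \<epsilon>
      \<longrightarrow> (\<exists>y. regk y n \<and> (\<forall>i<n. dist (y i) (v i) \<le> CR * \<epsilon>))"
    using approx_reg[where 'a='a, of n] by (auto simp: n_def)
  have m1: "m \<ge> 2" using DIM_positive[where 'a='a] by (simp add: m_def)
  have Kpos: "K > 0" using m1 by (simp add: K_def)
  have K3: "K \<ge> 3"
  proof -
    have "m^2 \<ge> 1" using m1 by (simp add: one_le_power)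
    thus ?thesis by (simp add: K_def)
  qed
  define A0 where "A0 = 1 + CR * K + K"
  have A0pos: "A0 > 0" using CR Kpos by (simp add: A0_def add_pos_pos)
  define Cf where "Cf = Cfin DIM('a)"
  have Cfpos: "Cf > 0" by (simp add: Cf_def Cfin_pos)
  define \<beta>d where "\<beta>d = min (min (1 / (12 * m^2)) (\<delta>R / K)) (min (eta0 DIM('a) / A0) (min (1 / (4 * Cf * A0)) (1 / (2 * K))))"
  define Cd where "Cd = Cf * A0"
  have bpos: "\<beta>d > 0" using m1 dR Kpos A0pos Cfpos eta0_pos[of "DIM('a)"] by (simp add: \<beta>d_def)
  have Cpos: "Cd > 0" using Cfpos A0pos by (simp add: Cd_def)
  show ?thesis
  proof (rule exI[of _ \<beta>d], rule conjI[OF bpos], rule exI[of _ Cd], rule conjI[OF Cpos], intro allI impI)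
    fix S :: "'a set" and \<beta> :: real
    assume H: "compact S \<and> 0 \<le> \<beta> \<and> \<beta> \<le> \<beta>d \<and> diameter S \<le> 1 + \<beta> \<and> Jung DIM('a) \<le> cheb_rad S"
    have S: "compact S" and b0: "0 \<le> \<beta>" and diam: "diameter S \<le> 1 + \<beta>" and cr: "Jung DIM('a) \<le> cheb_rad S"
      using H by auto
    have bb: "\<beta> \<le> 1 / (12 * m^2)" "\<beta> \<le> \<delta>R / K" "\<beta> \<le> eta0 DIM('a) / A0"
      "\<beta> \<le> 1 / (4 * Cf * A0)" "\<beta> \<le> 1 / (2 * K)"
      using H by (auto simp: \<beta>d_def)
    have b1: "\<beta> \<le> 1 / (12 * (real DIM('a) + 1)^2)" using bb(1) by (simp add: m_def)
    have bl1: "\<beta> \<le> 1"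
    proof -
      have "m^2 \<ge> 1" using m1 by (simp add: one_le_power)
      hence p: "12 * m^2 \<ge> 1" by linarith
      hence "1 / (12 * m^2) \<le> 1" using divide_le_eq_1_pos[of "12 * m^2" 1] by linarith
      thus ?thesis using bb(1) by linarith
    qed
    have Kb: "K * \<beta> \<le> \<delta>R" using le_div_mult[OF Kpos bb(2)] .
    have Ab: "A0 * \<beta> \<le> eta0 DIM('a)" using le_div_mult[OF A0pos bb(3)] .
    have Cb: "(4 * Cf * A0) * \<beta> \<le> 1" using le_div_mult[OF _ bb(4)] Cfpos A0pos by simp
    have K2b: "(2 * K) * \<beta> \<le> 1" using le_div_mult[OF _ bb(5)] Kpos by simp
    show "\<exists>\<Delta>. regular_unit_simplex \<Delta> \<and> (\<forall>W. witness S W \<longrightarrow> hausdorff_dist W \<Delta> \<le> Cd * \<beta>)"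
    proof (cases "S = {}")
      case True
      obtain y :: "nat \<Rightarrow> 'a" where "regk y n" using exists_reg[where 'a='a, of n] by (auto simp: n_def)
      hence "regular_unit_simplex (y ` {..<n})" using reg_simplex by (simp add: n_def)
      moreover have "\<not> witness S W" for W using True by (auto simp: witness_def)
      ultimately show ?thesis by blast
    next
      case False
      obtain c R T l where k: "cheb_rad S \<le> R" "\<forall>x\<in>S. dist x c \<le> R" "finite T" "T \<subseteq> S"
        "card T \<le> DIM('a) + 1" "\<forall>t\<in>T. dist t c = R" "\<forall>t\<in>T. 0 \<le> l t" "sum l T = 1"
        "(\<Sum>t\<in>T. l t *\<^sub>R t) = c"
        using kkt[OF S False] by blast
      have bS: "bounded S" using S by (rule compact_imp_bounded)
      have dS: "dist a b \<le> 1 + \<beta>" if "a \<in> S" "b \<in> S" for a b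
        using diameter_bounded_bound[OF bS that] diam by linarith
      have dT: "\<forall>t\<in>T. \<forall>t'\<in>T. dist t t' \<le> 1 + \<beta>" using k(4) dS by auto
      have RJ: "Jung DIM('a) \<le> R" using cr k(1) by simp
      note wn = weights_near[OF k(3) k(5) k(7) k(8) k(9) k(6) RJ dT b0 b1]
      have cT: "card T = n" using wn(1) by (simp add: n_def)
      obtain t where t: "bij_betw t {..<n} T"
        using ex_bij_betw_nat_finite[OF k(3)] cT by (auto simp: atLeast0LessThan)
      have tin: "t i \<in> T" if "i < n" for i using bij_betw_apply[OF t] that by auto
      have tinj: "t i \<noteq> t j" if "i < n" "j < n" "i \<noteq> j" for i j
        using bij_betw_imp_inj_on[OF t] that by (auto simp: inj_on_def)
      have near: "nearreg t n (K * \<beta>)"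
        unfolding nearreg_def
      proof (intro allI impI)
        fix i j assume ij: "i < n" "j < n" "i \<noteq> j"
        have up: "(dist (t i) (t j))^2 \<le> 1 + 3 * \<beta>"
        proof -
          have "(dist (t i) (t j))^2 \<le> (1 + \<beta>)^2" using dT tin ij by (intro power_mono) auto
          also have "\<dots> \<le> 1^2 + 3 * \<beta>" using b0 bl1 by (intro sq_bound_lin) auto
          finally show ?thesis by simp
        qed
        have lo: "1 - K * \<beta> \<le> (dist (t i) (t j))^2"
          using wn(3) tin[OF ij(1)] tin[OF ij(2)] tinj[OF ij] by (simp add: K_def m_def)
        have "3 * \<beta> \<le> K * \<beta>" using K3 b0 by (intro mult_right_mono) auto
        thus "\<bar>(dist (t i) (t j))^2 - 1\<bar> \<le> K * \<beta>" using up lo by (simp add: abs_le_iff)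
      qed
      obtain y where y: "regk y n" "\<forall>i<n. dist (y i) (t i) \<le> CR * (K * \<beta>)"
        using AR near Kb Kpos b0 by (meson mult_nonneg_nonneg less_imp_le)
      define \<Delta> where "\<Delta> = y ` {..<n}"
      have regD: "regular_unit_simplex \<Delta>" using reg_simplex[of y] y(1) by (simp add: \<Delta>_def n_def)
      have J1: "Jung DIM('a) \<le> 1" by (rule Jung_le1)
      have J0: "0 \<le> Jung DIM('a)" by (rule Jung_nonneg)
      have RJb: "R \<le> Jung DIM('a) + \<beta>"
      proof -
        have "Jung DIM('a) * \<beta> \<le> 1 * \<beta>" using J1 b0 by (intro mult_right_mono) auto
        thus ?thesis using wn(2) by (simp add: algebra_simps)
      qed
      have CKb: "0 \<le> CR * (K * \<beta>)" using CR Kpos b0 by simp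
      have A0e: "A0 * \<beta> = \<beta> + CR * (K * \<beta>) + K * \<beta>" by (simp add: A0_def algebra_simps)
      have Kb0: "0 \<le> K * \<beta>" using Kpos b0 by simp
      have main: "hausdorff_dist W \<Delta> \<le> Cd * \<beta>" if wit: "witness S W" for W
      proof -
        have WS: "W \<subseteq> S" and cW: "card W = DIM('a) + 1" and crW: "Jung DIM('a) \<le> cheb_rad W"
          using wit by (auto simp: witness_def)
        have finW: "finite W" using cW by (metis card.infinite nat.distinct(1) Suc_eq_plus1)
        have neW: "W \<noteq> {}" using cW by auto
        have ww0: "\<forall>w\<in>W. \<forall>w'\<in>W. w \<noteq> w' \<longrightarrow> 1 - K * \<beta> \<le> (dist w w')^2"
          using witness_near[OF S diam b0 b1 WS cW crW] by (simp add: K_def m_def)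
        have yc: "\<forall>k<Suc DIM('a). dist (y k) c \<le> Jung DIM('a) + A0 * \<beta>"
        proof (intro allI impI)
          fix k assume kk: "k < Suc DIM('a)"
          have "dist (y k) c \<le> dist (y k) (t k) + dist (t k) c" by (rule dist_triangle)
          moreover have "dist (y k) (t k) \<le> CR * (K * \<beta>)" using y(2) kk by (simp add: n_def)
          moreover have "dist (t k) c = R" using k(6) tin kk by (simp add: n_def)
          ultimately show "dist (y k) c \<le> Jung DIM('a) + A0 * \<beta>" using RJb A0e Kb0 by linarith
        qed
        have wc: "\<forall>w\<in>W. dist w c \<le> Jung DIM('a) + A0 * \<beta>"
        proof
          fix w assume "w \<in> W"
          hence "dist w c \<le> R" using k(2) WS by auto
          thus "dist w c \<le> Jung DIM('a) + A0 * \<beta>" using RJb A0e Kb0 CKb by linarith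
        qed
        have wy: "\<forall>w\<in>W. \<forall>k<Suc DIM('a). dist w (y k) \<le> 1 + A0 * \<beta>"
        proof (intro ballI allI impI)
          fix w k assume w: "w \<in> W" and kk: "k < Suc DIM('a)"
          have "dist w (y k) \<le> dist w (t k) + dist (t k) (y k)" by (rule dist_triangle)
          moreover have "dist (t k) (y k) \<le> CR * (K * \<beta>)" using y(2) kk by (simp add: n_def dist_commute)
          moreover have "dist w (t k) \<le> 1 + \<beta>"
          proof (rule dS)
            show "w \<in> S" using WS w by auto
            show "t k \<in> S" using tin[of k] kk k(4) by (auto simp: n_def)
          qed
          ultimately show "dist w (y k) \<le> 1 + A0 * \<beta>" using A0e Kb0 by linarith
        qed
        have ww: "\<forall>w\<in>W. \<forall>w'\<in>W. w \<noteq> w' \<longrightarrow> 1 - A0 * \<beta> \<le> (dist w w')^2"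
          using ww0 A0e b0 CKb by fastforce
        have e0: "0 \<le> A0 * \<beta>" using A0pos b0 by simp
        have fc: "\<forall>w\<in>W. \<exists>k<Suc DIM('a). dist w (y k) \<le> Cf * (A0 * \<beta>)"
          using final_close[OF y(1)[unfolded n_def] yc finW _ wc wy ww e0 Ab] cW by (simp add: Cf_def)
        have CdE: "Cf * (A0 * \<beta>) = Cd * \<beta>" by (simp add: Cd_def)
        define kf where "kf w = (SOME k. k < n \<and> dist w (y k) \<le> Cd * \<beta>)" for w
        have kf: "kf w < n \<and> dist w (y (kf w)) \<le> Cd * \<beta>" if "w \<in> W" for w
          unfolding kf_def by (rule someI_ex) (use fc that CdE in \<open>auto simp: n_def\<close>)
        have small2: "2 * (Cd * \<beta>) \<le> 1/2" using Cb by (simp add: Cd_def algebra_simps)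
        have injk: "inj_on kf W"
        proof (rule inj_onI, rule ccontr)
          fix w w' assume w: "w \<in> W" "w' \<in> W" "kf w = kf w'" "w \<noteq> w'"
          have "dist w w' \<le> dist w (y (kf w)) + dist w' (y (kf w))" by (metis dist_commute dist_triangle)
          also have "\<dots> \<le> Cd * \<beta> + Cd * \<beta>" using kf[OF w(1)] kf[OF w(2)] w(3) by (intro add_mono) auto
          finally have dle: "dist w w' \<le> 1/2" using small2 by linarith
          have "(dist w w')^2 \<le> (1/2)^2" using dle by (intro power_mono) auto
          moreover have "1 - K * \<beta> \<le> (dist w w')^2" using ww0 w by auto
          ultimately show False using K2b by (simp add: power2_eq_square)
        qed
        have img: "kf ` W = {..<n}"
        proof (rule card_subset_eq)
          show "kf ` W \<subseteq> {..<n}" using kf by auto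
          show "card (kf ` W) = card {..<n}" using card_image[OF injk] cW by (simp add: n_def)
        qed simp
        show ?thesis
        proof (rule hausdorff_le[OF neW])
          have "0 \<in> {..<n}" by (simp add: n_def)
          thus "\<Delta> \<noteq> {}" by (auto simp: \<Delta>_def)
          show "\<forall>a\<in>W. \<exists>b\<in>\<Delta>. dist a b \<le> Cd * \<beta>"
            using kf by (auto simp: \<Delta>_def)
          show "\<forall>b\<in>\<Delta>. \<exists>a\<in>W. dist a b \<le> Cd * \<beta>"
          proof
            fix b assume "b \<in> \<Delta>"
            then obtain j where j: "j < n" "b = y j" by (auto simp: \<Delta>_def)
            then obtain w where "w \<in> W" "kf w = j" using img by (metis imageE lessThan_iff)
            thus "\<exists>a\<in>W. dist a b \<le> Cd * \<beta>" using kf j by metis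
          qed
        qed
      qed
      show ?thesis using regD main by blast
    qed
  qed
qed


end
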